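(* Let $\mu,q$ be positive integers with $q\ge 2$. There is a bijection between the set of isomorphism classes of symmetric $(\mu,q)$-nets and the set of equivalence classes of codes $C\subseteq[q]^{\mu q}$ with $|C|=\mu q^2$ and minimum Hamming distance at least $\mu q-\mu$.
   Context: $[q]=\{0,\dots,q-1\}$; the Hamming distance of two words is the number of coordinates in which they differ. A symmetric $(\mu,q)$-net is a pair $(X,\mathcal B)$ where $X$ is a set of $\mu q^2$ points and $\mathcal B$ is a collection of subsets of $X$ of size $\mu q$ (blocks) such that: (s1) $\mathcal B$ can be partitioned into $\mu q$ classes (block parallel classes), each of which is a partition of $X$; (s2) any two blocks belonging to different block parallel classes intersect in exactly $\mu$ points; (s3) $X$ can be partitioned into $\mu q$ sets of $q$ points (point parallel classes) such that any two points from different point parallel classes lie together in exactly $\mu$ blocks, while two distinct points from the same point parallel class lie together in no block. Two symmetric nets $(X,\mathcal B)$ and $(X',\mathcal B')$ are isomorphic if there is a bijection $\phi:X\to X'$ with $\{\phi(B):B\in\mathcal B\}=\mathcal B'$. Two codes $C,D\subseteq[q]^n$ are equivalent if $D$ is obtained from $C$ by permuting the $n$ coordinates and then applying, in each coordinate separately, a permutation of the symbols $[q]$. *)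

theory Defs
  imports Main "HOL-Library.Disjoint_Sets" "HOL-Combinatorics.Permutations"
begin

definition symmetric_net :: "nat \<Rightarrow> nat \<Rightarrow> nat set \<Rightarrow> nat set set \<Rightarrow> bool" where
  "symmetric_net \<mu> q X B \<longleftrightarrow>
     finite X \<and> card X = \<mu> * q^2 \<and>
     (\<forall>b\<in>B. b \<subseteq> X \<and> card b = \<mu> * q) \<and>
     (\<exists>PB :: nat set set set.
        partition_on B PB \<and> finite PB \<and> card PB = \<mu> * q \<and>
        (\<forall>c\<in>PB. partition_on X c) \<and>
        (\<forall>c\<in>PB. \<forall>c'\<in>PB. c \<noteq> c' \<longrightarrow>
            (\<forall>b\<in>c. \<forall>b'\<in>c'. card (b \<inter> b') = \<mu>))) \<and>
     (\<exists>PX :: nat set set.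
        partition_on X PX \<and> finite PX \<and> card PX = \<mu> * q \<and>
        (\<forall>P\<in>PX. card P = q) \<and>
        (\<forall>P\<in>PX. \<forall>P'\<in>PX. \<forall>x\<in>P. \<forall>y\<in>P'.
            (P \<noteq> P' \<longrightarrow> card {b\<in>B. x \<in> b \<and> y \<in> b} = \<mu>) \<and>
            (P = P' \<and> x \<noteq> y \<longrightarrow> card {b\<in>B. x \<in> b \<and> y \<in> b} = 0)))"

definition symmetric_nets :: "nat \<Rightarrow> nat \<Rightarrow> (nat set \<times> nat set set) set" where
  "symmetric_nets \<mu> q = {(X, B). symmetric_net \<mu> q X B}"

definition net_iso :: "((nat set \<times> nat set set) \<times> (nat set \<times> nat set set)) set" where
  "net_iso = {((X, B), (X', B')). \<exists>\<phi>. bij_betw \<phi> X X' \<and> (\<lambda>b. \<phi> ` b) ` B = B'}"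

definition words :: "nat \<Rightarrow> nat \<Rightarrow> nat list set" where
  "words q n = {w. length w = n \<and> (\<forall>i<n. w ! i < q)}"

definition hamming :: "nat list \<Rightarrow> nat list \<Rightarrow> nat" where
  "hamming u v = card {i. i < length u \<and> u ! i \<noteq> v ! i}"

definition codes :: "nat \<Rightarrow> nat \<Rightarrow> nat \<Rightarrow> nat \<Rightarrow> nat list set set" where
  "codes q n M d = {C. C \<subseteq> words q n \<and> card C = M \<and>
                      (\<forall>u\<in>C. \<forall>v\<in>C. u \<noteq> v \<longrightarrow> d \<le> hamming u v)}"

definition code_equiv :: "nat \<Rightarrow> nat \<Rightarrow> (nat list set \<times> nat list set) set" where
  "code_equiv q n = {(C, D). \<exists>\<sigma> \<pi>. \<sigma> permutes {0..<n} \<and> (\<forall>i<n. \<pi> i permutes {0..<q}) \<and>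
        D = (\<lambda>w. map (\<lambda>i. \<pi> i (w ! \<sigma> i)) [0..<n]) ` C}"

end

theory Submission
  imports Defs Complex_Main
begin

lemma quot_eq_iff:
  assumes "\<forall>x\<in>A. (x,x)\<in>r" "\<forall>x\<in>A. \<forall>z. (x,z)\<in>r \<longrightarrow> (z,x)\<in>r" "trans r"
    and "x\<in>A" "y\<in>A"
  shows "r``{x} = r``{y} \<longleftrightarrow> (x,y)\<in>r"
proof
  assume "r``{x} = r``{y}"
  then show "(x,y)\<in>r" using assms by blast
next
  assume xy: "(x,y)\<in>r"
  hence yx: "(y,x)\<in>r" using assms by blast
  show "r``{x} = r``{y}"
    using xy yx \<open>trans r\<close> by (auto dest: transD)
qed

lemma quot_bij:
  assumes rA: "\<forall>x\<in>A. (x,x)\<in>r" "\<forall>x\<in>A. \<forall>z. (x,z)\<in>r \<longrightarrow> (z,x)\<in>r" "trans r"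
    and sB: "\<forall>x\<in>B. (x,x)\<in>s" "\<forall>x\<in>B. \<forall>z. (x,z)\<in>s \<longrightarrow> (z,x)\<in>s" "trans s"
    and tot: "\<forall>x\<in>A. \<exists>y\<in>B. R x y" and sur: "\<forall>y\<in>B. \<exists>x\<in>A. R x y"
    and compat: "\<forall>x\<in>A. \<forall>x'\<in>A. \<forall>y\<in>B. \<forall>y'\<in>B. R x y \<longrightarrow> R x' y' \<longrightarrow> ((x,x')\<in>r \<longleftrightarrow> (y,y')\<in>s)"
  shows "\<exists>f. bij_betw f (A//r) (B//s)"
proof -
  define g where "g x = (SOME y. y\<in>B \<and> R x y)" for x
  have g: "g x \<in> B \<and> R x (g x)" if "x\<in>A" for x
  proof -
    have "\<exists>y. y\<in>B \<and> R x y" using tot that by blast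
    from someI_ex[OF this] show ?thesis unfolding g_def .
  qed
  define rep where "rep K = (SOME x. x\<in>A \<and> K = r``{x})" for K
  have rep: "rep K \<in> A \<and> K = r``{rep K}" if "K \<in> A//r" for K
  proof -
    have "\<exists>x. x\<in>A \<and> K = r``{x}" using that by (auto elim!: quotientE)
    from someI_ex[OF this] show ?thesis unfolding rep_def .
  qed
  define f where "f K = s``{g (rep K)}" for K
  have inj: "inj_on f (A//r)"
  proof (rule inj_onI)
    fix K1 K2 assume K: "K1 \<in> A//r" "K2 \<in> A//r" "f K1 = f K2"
    have "(g (rep K1), g (rep K2)) \<in> s"
      using K(3) quot_eq_iff[OF sB, of "g (rep K1)" "g (rep K2)"] g rep K(1,2)
      unfolding f_def by blast
    moreover have "rep K1 \<in> A" "rep K2 \<in> A" using rep K(1,2) by auto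
    ultimately have "(rep K1, rep K2) \<in> r" using compat[rule_format, of "rep K1" "rep K2" "g (rep K1)" "g (rep K2)"] g by simp
    hence "r``{rep K1} = r``{rep K2}" using quot_eq_iff[OF rA, of "rep K1" "rep K2"] rep K(1,2) by simp
    thus "K1 = K2" using rep K(1,2) by simp
  qed
  have img: "f ` (A//r) = B//s"
  proof
    show "f ` (A//r) \<subseteq> B//s" unfolding f_def using g rep by (auto intro: quotientI)
  next
    show "B//s \<subseteq> f ` (A//r)"
    proof
      fix L assume "L \<in> B//s"
      then obtain y where y: "y\<in>B" "L = s``{y}" by (auto elim: quotientE)
      then obtain x where x: "x\<in>A" "R x y" using sur by blast
      define K where "K = r``{x}"
      have K: "K \<in> A//r" using x K_def by (auto intro: quotientI)
      have "r``{rep K} = r``{x}" using rep[OF K] K_def by simp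
      hence "(rep K, x) \<in> r" using quot_eq_iff[OF rA, of "rep K" x] rep[OF K] x by simp
      moreover have "rep K \<in> A" "R (rep K) (g (rep K))" "g (rep K) \<in> B" using rep[OF K] g by auto
      ultimately have "(g (rep K), y) \<in> s" using compat[rule_format, of "rep K" x "g (rep K)" y] x y by simp
      hence "f K = L" unfolding f_def using quot_eq_iff[OF sB, of "g (rep K)" y] g rep K y by simp
      thus "L \<in> f ` (A//r)" using K by blast
    qed
  qed
  show ?thesis using inj img unfolding bij_betw_def by blast
qed

lemma net_iso_refl: "((X,B),(X,B)) \<in> net_iso"
  unfolding net_iso_def by (auto intro!: exI[of _ id])

lemma net_iso_sym:
  assumes "\<forall>b\<in>B. b \<subseteq> X" "((X,B),(X',B')) \<in> net_iso"
  shows "((X',B'),(X,B)) \<in> net_iso"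
proof -
  obtain \<phi> where \<phi>: "bij_betw \<phi> X X'" "(\<lambda>b. \<phi> ` b) ` B = B'" using assms(2) unfolding net_iso_def by auto
  define \<psi> where "\<psi> = inv_into X \<phi>"
  have "bij_betw \<psi> X' X" using \<phi>(1) bij_betw_inv_into unfolding \<psi>_def by blast
  moreover have "(\<lambda>b. \<psi> ` b) ` B' = B"
  proof -
    have "(\<lambda>b. \<psi> ` b) ` B' = (\<lambda>b. \<psi> ` \<phi> ` b) ` B" using \<phi>(2) by auto
    also have "\<dots> = (\<lambda>b. b) ` B"
      apply (rule image_cong[OF refl])
      using assms(1) \<phi>(1) unfolding \<psi>_def bij_betw_def by (simp add: inv_into_image_cancel)
    finally show ?thesis by simp
  qed
  ultimately show ?thesis unfolding net_iso_def by auto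
qed

lemma net_iso_trans: "trans net_iso"
proof (rule transI)
  fix a b c assume ab: "(a,b) \<in> net_iso" and bc: "(b,c) \<in> net_iso"
  obtain X B X' B' X'' B'' where abc: "a = (X,B)" "b = (X',B')" "c = (X'',B'')" by (cases a, cases b, cases c) auto
  obtain \<phi> where \<phi>: "bij_betw \<phi> X X'" "(\<lambda>b. \<phi> ` b) ` B = B'" using ab abc unfolding net_iso_def by auto
  obtain \<psi> where \<psi>: "bij_betw \<psi> X' X''" "(\<lambda>b. \<psi> ` b) ` B' = B''" using bc abc unfolding net_iso_def by auto
  have "bij_betw (\<psi> \<circ> \<phi>) X X''" using \<phi>(1) \<psi>(1) by (rule bij_betw_trans)
  moreover have "(\<lambda>b. (\<psi> \<circ> \<phi>) ` b) ` B = B''" using \<phi>(2) \<psi>(2) by (auto simp: image_comp[symmetric] image_image)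
  ultimately show "(a,c) \<in> net_iso" using abc unfolding net_iso_def by auto
qed

definition ctr :: "nat \<Rightarrow> (nat \<Rightarrow> nat) \<Rightarrow> (nat \<Rightarrow> nat \<Rightarrow> nat) \<Rightarrow> nat list \<Rightarrow> nat list" where
  "ctr n \<sigma> \<pi> w = map (\<lambda>i. \<pi> i (w ! \<sigma> i)) [0..<n]"

lemma code_equiv_iff: "(C,D) \<in> code_equiv q n \<longleftrightarrow>
   (\<exists>\<sigma> \<pi>. \<sigma> permutes {0..<n} \<and> (\<forall>i<n. \<pi> i permutes {0..<q}) \<and> D = ctr n \<sigma> \<pi> ` C)"
  unfolding code_equiv_def ctr_def by auto

lemma ctr_nth: "i < n \<Longrightarrow> ctr n \<sigma> \<pi> w ! i = \<pi> i (w ! \<sigma> i)" "length (ctr n \<sigma> \<pi> w) = n"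
  unfolding ctr_def by auto

lemma code_equiv_refl: "\<forall>w\<in>C. length w = n \<Longrightarrow> (C,C) \<in> code_equiv q n"
proof -
  assume a: "\<forall>w\<in>C. length w = n"
  have "ctr n id (\<lambda>i. id) w = w" if "w\<in>C" for w
    using a that by (intro nth_equalityI) (auto simp: ctr_nth)
  hence "C = ctr n id (\<lambda>i. id) ` C" by force
  thus ?thesis unfolding code_equiv_iff by (auto intro!: exI[of _ id] exI[of _ "\<lambda>i. id"] permutes_id)
qed

lemma code_equiv_trans: "trans (code_equiv q n)"
proof (rule transI)
  fix C D E assume "(C,D) \<in> code_equiv q n" "(D,E) \<in> code_equiv q n"
  then obtain \<sigma>1 \<pi>1 \<sigma>2 \<pi>2 where 1: "\<sigma>1 permutes {0..<n}" "\<forall>i<n. \<pi>1 i permutes {0..<q}" "D = ctr n \<sigma>1 \<pi>1 ` C"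
    and 2: "\<sigma>2 permutes {0..<n}" "\<forall>i<n. \<pi>2 i permutes {0..<q}" "E = ctr n \<sigma>2 \<pi>2 ` D"
    unfolding code_equiv_iff by blast
  define \<sigma> where "\<sigma> = \<sigma>1 \<circ> \<sigma>2"
  define \<pi> where "\<pi> i = \<pi>2 i \<circ> \<pi>1 (\<sigma>2 i)" for i
  have s2: "\<sigma>2 i < n" if "i<n" for i using 2(1) that permutes_in_image by fastforce
  have "\<sigma> permutes {0..<n}" unfolding \<sigma>_def by (rule permutes_compose[OF 2(1) 1(1)])
  moreover have "\<forall>i<n. \<pi> i permutes {0..<q}" unfolding \<pi>_def using 1(2) 2(2) s2 by (auto intro: permutes_compose)
  moreover have "ctr n \<sigma>2 \<pi>2 (ctr n \<sigma>1 \<pi>1 w) = ctr n \<sigma> \<pi> w" for w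
    by (intro nth_equalityI) (auto simp: ctr_nth s2 \<sigma>_def \<pi>_def)
  hence "E = ctr n \<sigma> \<pi> ` C" using 1(3) 2(3) by (auto simp: image_image)
  ultimately show "(C,E) \<in> code_equiv q n" unfolding code_equiv_iff by blast
qed

lemma code_equiv_sym:
  assumes "\<forall>w\<in>C. length w = n" "(C,D) \<in> code_equiv q n"
  shows "(D,C) \<in> code_equiv q n"
proof -
  obtain \<sigma> \<pi> where 1: "\<sigma> permutes {0..<n}" "\<forall>i<n. \<pi> i permutes {0..<q}" "D = ctr n \<sigma> \<pi> ` C"
    using assms(2) unfolding code_equiv_iff by blast
  define \<sigma>' where "\<sigma>' = inv \<sigma>"
  define \<pi>' where "\<pi>' i = inv (\<pi> (\<sigma>' i))" for i
  have s': "\<sigma>' permutes {0..<n}" unfolding \<sigma>'_def using 1(1) by (rule permutes_inv)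
  have s'n: "\<sigma>' i < n" if "i<n" for i using s' that permutes_in_image by fastforce
  have "\<forall>i<n. \<pi>' i permutes {0..<q}" unfolding \<pi>'_def using 1(2) s'n by (auto intro: permutes_inv)
  moreover have "ctr n \<sigma>' \<pi>' (ctr n \<sigma> \<pi> w) = w" if "w \<in> C" for w
  proof (intro nth_equalityI)
    show "length (ctr n \<sigma>' \<pi>' (ctr n \<sigma> \<pi> w)) = length w" using assms(1) that by (simp add: ctr_nth)
    fix i assume "i < length (ctr n \<sigma>' \<pi>' (ctr n \<sigma> \<pi> w))"
    hence i: "i < n" by (simp add: ctr_nth)
    have "\<sigma> (\<sigma>' i) = i" unfolding \<sigma>'_def using 1(1) permutes_inverses(1) by fastforce
    moreover have "bij (\<pi> (\<sigma>' i))" using 1(2) s'n[OF i] permutes_bij by blast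
    ultimately show "ctr n \<sigma>' \<pi>' (ctr n \<sigma> \<pi> w) ! i = w ! i"
      using i s'n[OF i] by (simp add: ctr_nth \<pi>'_def bij_is_inj)
  qed
  hence "C = ctr n \<sigma>' \<pi>' ` D" using 1(3) by (auto simp: image_image)
  ultimately show ?thesis unfolding code_equiv_iff using s' by blast
qed

definition agr :: "nat set \<Rightarrow> nat list \<Rightarrow> nat list \<Rightarrow> nat" where
  "agr J u v = card {j\<in>J. u!j = v!j}"
definition cnt :: "nat list set \<Rightarrow> nat \<Rightarrow> nat \<Rightarrow> nat" where
  "cnt S j b = card {u\<in>S. u!j = b}"

lemma card_filter_sum: "finite J \<Longrightarrow> card {j\<in>J. P j} = (\<Sum>j\<in>J. if P j then 1 else 0::nat)"
  by (simp add: sum.If_cases Int_def)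

lemma ind_sum: "(x::nat) < q \<Longrightarrow> (\<Sum>b<q. (if x = b then 1 else 0) * (if y = b then 1 else 0)) = (if x = y then 1 else 0::nat)"
proof -
  assume "x < q"
  have "(\<Sum>b<q. (if x = b then 1 else 0) * (if y = b then 1 else 0)) = (\<Sum>b<q. if b = x then (if y = x then 1 else 0) else 0::nat)"
    by (rule sum.cong) auto
  also have "\<dots> = (if x = y then 1 else 0)" using \<open>x<q\<close> by (simp add: sum.delta')
  finally show ?thesis by simp
qed

lemma agr_sum:
  assumes "finite S" "finite J" "\<forall>u\<in>S. \<forall>j\<in>J. u!j < q"
  shows "(\<Sum>u\<in>S. \<Sum>v\<in>S. agr J u v) = (\<Sum>j\<in>J. \<Sum>b<q. (cnt S j b)^2)"
proof -
  have "(\<Sum>u\<in>S. \<Sum>v\<in>S. agr J u v) = (\<Sum>u\<in>S. \<Sum>v\<in>S. \<Sum>j\<in>J. if u!j = v!j then 1 else 0)"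
    unfolding agr_def using assms by (simp add: card_filter_sum)
  also have "\<dots> = (\<Sum>u\<in>S. \<Sum>j\<in>J. \<Sum>v\<in>S. if u!j = v!j then 1 else 0)"
    by (rule sum.cong[OF refl], rule sum.swap)
  also have "\<dots> = (\<Sum>j\<in>J. \<Sum>u\<in>S. \<Sum>v\<in>S. if u!j = v!j then 1 else 0)"
    by (rule sum.swap)
  also have "\<dots> = (\<Sum>j\<in>J. \<Sum>u\<in>S. \<Sum>v\<in>S. \<Sum>b<q. (if u!j = b then 1 else 0) * (if v!j = b then 1 else 0))"
    using assms(3) by (intro sum.cong refl) (simp add: ind_sum)
  also have "\<dots> = (\<Sum>j\<in>J. \<Sum>b<q. \<Sum>u\<in>S. \<Sum>v\<in>S. (if u!j = b then 1 else 0) * (if v!j = b then 1 else 0))"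
  proof (rule sum.cong[OF refl])
    fix j
    have "(\<Sum>u\<in>S. \<Sum>v\<in>S. \<Sum>b<q. (if u!j = b then 1 else 0) * (if v!j = b then 1 else (0::nat)))
        = (\<Sum>u\<in>S. \<Sum>b<q. \<Sum>v\<in>S. (if u!j = b then 1 else 0) * (if v!j = b then 1 else 0))"
      by (rule sum.cong[OF refl], rule sum.swap)
    also have "\<dots> = (\<Sum>b<q. \<Sum>u\<in>S. \<Sum>v\<in>S. (if u!j = b then 1 else 0) * (if v!j = b then 1 else 0))"
      by (rule sum.swap)
    finally show "(\<Sum>u\<in>S. \<Sum>v\<in>S. \<Sum>b<q. (if u!j = b then 1 else 0) * (if v!j = b then 1 else (0::nat)))
        = (\<Sum>b<q. \<Sum>u\<in>S. \<Sum>v\<in>S. (if u!j = b then 1 else 0) * (if v!j = b then 1 else 0))" .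
  qed
  also have "\<dots> = (\<Sum>j\<in>J. \<Sum>b<q. (cnt S j b)^2)"
  proof (intro sum.cong refl)
    fix j b
    have c: "cnt S j b = (\<Sum>u\<in>S. if u!j = b then 1 else 0)" unfolding cnt_def using assms by (simp add: card_filter_sum)
    show "(\<Sum>u\<in>S. \<Sum>v\<in>S. (if u!j = b then 1 else 0) * (if v!j = b then 1 else 0)) = (cnt S j b)^2"
      unfolding c power2_eq_square sum_product by simp
  qed
  finally show ?thesis .
qed

lemma cnt_sum:
  assumes "finite S" "\<forall>u\<in>S. u!j < q"
  shows "(\<Sum>b<q. cnt S j b) = card S"
proof -
  have "(\<Sum>b<q. cnt S j b) = (\<Sum>b<q. \<Sum>u\<in>S. if u!j = b then 1 else 0)"
    unfolding cnt_def using assms by (simp add: card_filter_sum)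
  also have "\<dots> = (\<Sum>u\<in>S. \<Sum>b<q. if u!j = b then 1 else 0)" by (rule sum.swap)
  also have "\<dots> = (\<Sum>u\<in>S. 1)" using assms(2) by (intro sum.cong refl) (simp add: sum.delta)
  finally show ?thesis by simp
qed

lemma agr_self: "finite J \<Longrightarrow> agr J u u = card J" unfolding agr_def by simp

lemma plotkin_identity:
  assumes "finite S" "finite J" "\<forall>u\<in>S. \<forall>j\<in>J. u!j < q" "q > 0"
  shows "(\<Sum>j\<in>J. \<Sum>b<q. (real (cnt S j b) - real (card S)/real q)^2) + (\<Sum>u\<in>S. \<Sum>v\<in>S-{u}. (real t - real (agr J u v)))
       = real (card S) * real (card J) + real (card S) * (real (card S) - 1) * real t - real (card J) * (real (card S))^2 / real q"
proof -
  define s where "s = real (card S)"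
  have P1: "(\<Sum>b<q. (real (cnt S j b) - s/real q)^2) = (\<Sum>b<q. real ((cnt S j b)^2)) - s^2/real q" if "j\<in>J" for j
  proof -
    have cs0: "(\<Sum>b<q. cnt S j b) = card S" using cnt_sum[of S j q] assms that by blast
    have cs: "(\<Sum>b<q. real (cnt S j b)) = s" unfolding s_def
      using arg_cong[where f=real, OF cs0] by simp
    have "(\<Sum>b<q. (real (cnt S j b) - s/real q)^2) = (\<Sum>b<q. real ((cnt S j b)^2) - 2*(s/real q) * real (cnt S j b) + (s/real q)^2)"
      by (intro sum.cong refl) (simp add: power2_diff)
    also have "\<dots> = (\<Sum>b<q. real ((cnt S j b)^2)) - 2*(s/real q) * (\<Sum>b<q. real (cnt S j b)) + real q*(s/real q)^2"
      by (simp add: sum.distrib sum_subtractf sum_distrib_left)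
    also have "\<dots> = (\<Sum>b<q. real ((cnt S j b)^2)) - s^2/real q"
      using assms(4) unfolding cs by (simp add: power2_eq_square field_simps)
    finally show ?thesis .
  qed
  have P2: "(\<Sum>u\<in>S. \<Sum>v\<in>S-{u}. (real t - real (agr J u v))) = s*(s-1)*t - (real (\<Sum>u\<in>S. \<Sum>v\<in>S. agr J u v) - s * card J)"
  proof -
    have "(\<Sum>u\<in>S. \<Sum>v\<in>S-{u}. (real t - real (agr J u v))) = (\<Sum>u\<in>S. (s - 1) * t - ((\<Sum>v\<in>S. real (agr J u v)) - card J))"
    proof (intro sum.cong refl)
      fix u assume u: "u\<in>S"
      have "(\<Sum>v\<in>S-{u}. (real t - real (agr J u v))) = (\<Sum>v\<in>S-{u}. real t) - (\<Sum>v\<in>S-{u}. real (agr J u v))"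
        by (simp add: sum_subtractf)
      also have "(\<Sum>v\<in>S-{u}. real (agr J u v)) = (\<Sum>v\<in>S. real (agr J u v)) - card J"
        using u assms(1,2) by (simp add: sum_diff1 agr_self)
      also have "(\<Sum>v\<in>S-{u}. real t) = (s-1)*t" using u assms(1) unfolding s_def
      proof -
        have "card S \<ge> 1" using u assms(1) by (metis One_nat_def Suc_leI card_gt_0_iff empty_iff)
        thus "(\<Sum>v\<in>S-{u}. real t) = (real (card S) - 1) * real t" using u assms(1) by (simp add: of_nat_diff)
      qed
      finally show "(\<Sum>v\<in>S-{u}. (real t - real (agr J u v))) = (s - 1) * t - ((\<Sum>v\<in>S. real (agr J u v)) - card J)" .
    qed
    also have "\<dots> = (\<Sum>u\<in>S. ((s-1)*t + card J) - (\<Sum>v\<in>S. real (agr J u v)))"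
      by (rule sum.cong) auto
    also have "\<dots> = (\<Sum>u\<in>S. ((s-1)*t + card J)) - (\<Sum>u\<in>S. \<Sum>v\<in>S. real (agr J u v))"
      by (rule sum_subtractf)
    also have "\<dots> = s*((s-1)*t + card J) - real (\<Sum>u\<in>S. \<Sum>v\<in>S. agr J u v)"
      unfolding s_def by simp
    also have "\<dots> = s*(s-1)*t - (real (\<Sum>u\<in>S. \<Sum>v\<in>S. agr J u v) - s * card J)"
      by (simp add: algebra_simps)
    finally show ?thesis .
  qed
  have P3: "real (\<Sum>u\<in>S. \<Sum>v\<in>S. agr J u v) = (\<Sum>j\<in>J. \<Sum>b<q. real ((cnt S j b)^2))"
    using arg_cong[OF agr_sum[OF assms(1-3)], of real] by (simp add: of_nat_sum)
  have P4: "(\<Sum>j\<in>J. \<Sum>b<q. (real (cnt S j b) - s/real q)^2) = (\<Sum>j\<in>J. \<Sum>b<q. real ((cnt S j b)^2)) - real (card J) * (s^2/real q)"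
    using P1 by (simp add: sum_subtractf)
  show ?thesis
    unfolding s_def[symmetric] P2 P3 P4 by (simp add: algebra_simps)
qed

lemma plotkin_conseq:
  assumes "finite S" "finite J" "\<forall>u\<in>S. \<forall>j\<in>J. u!j < q" "q > 0"
    and le: "\<forall>u\<in>S. \<forall>v\<in>S. u \<noteq> v \<longrightarrow> agr J u v \<le> t"
  shows "0 \<le> real (card S) * real (card J) + real (card S) * (real (card S) - 1) * real t - real (card J) * (real (card S))^2 / real q"
    and "real (card S) * real (card J) + real (card S) * (real (card S) - 1) * real t - real (card J) * (real (card S))^2 / real q = 0
       \<Longrightarrow> (\<forall>j\<in>J. \<forall>b<q. real (cnt S j b) = real (card S) / real q) \<and> (\<forall>u\<in>S. \<forall>v\<in>S. u \<noteq> v \<longrightarrow> agr J u v = t)"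
proof -
  let ?A = "(\<Sum>j\<in>J. \<Sum>b<q. (real (cnt S j b) - real (card S)/real q)^2)"
  let ?B = "(\<Sum>u\<in>S. \<Sum>v\<in>S-{u}. (real t - real (agr J u v)))"
  have id: "?A + ?B = real (card S) * real (card J) + real (card S) * (real (card S) - 1) * real t - real (card J) * (real (card S))^2 / real q"
    by (rule plotkin_identity[OF assms(1-4)])
  have A: "0 \<le> ?A" by (intro sum_nonneg) auto
  have Bt: "0 \<le> real t - real (agr J u v)" if "u\<in>S" "v\<in>S-{u}" for u v
    using le that by auto
  have B: "0 \<le> ?B" by (auto intro!: sum_nonneg Bt)
  show "0 \<le> real (card S) * real (card J) + real (card S) * (real (card S) - 1) * real t - real (card J) * (real (card S))^2 / real q"
    using A B id by linarith
  assume z: "real (card S) * real (card J) + real (card S) * (real (card S) - 1) * real t - real (card J) * (real (card S))^2 / real q = 0"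
  hence "?A = 0" "?B = 0" using A B id by linarith+
  from \<open>?A = 0\<close> have "\<forall>j\<in>J. (\<Sum>b<q. (real (cnt S j b) - real (card S)/real q)^2) = 0"
    using assms(2) by (subst (asm) sum_nonneg_eq_0_iff) (auto intro: sum_nonneg)
  hence 1: "\<forall>j\<in>J. \<forall>b<q. real (cnt S j b) = real (card S) / real q"
    by (auto simp: sum_nonneg_eq_0_iff)
  from \<open>?B = 0\<close> have "\<forall>u\<in>S. (\<Sum>v\<in>S-{u}. (real t - real (agr J u v))) = 0"
    using assms(1) Bt by (subst (asm) sum_nonneg_eq_0_iff) (auto intro!: sum_nonneg Bt)
  hence "\<forall>u\<in>S. \<forall>v\<in>S-{u}. real t - real (agr J u v) = 0"
  proof (intro ballI)
    fix u v assume H: "\<forall>u\<in>S. (\<Sum>v\<in>S-{u}. (real t - real (agr J u v))) = 0" and u: "u\<in>S" and v: "v \<in> S-{u}"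
    have "(\<Sum>v\<in>S-{u}. (real t - real (agr J u v))) = 0" using H u by blast
    moreover have "finite (S-{u})" using assms(1) by simp
    ultimately show "real t - real (agr J u v) = 0" using sum_nonneg_eq_0_iff[of "S-{u}" "\<lambda>v. real t - real (agr J u v)"] Bt[OF u] v by blast
  qed
  hence 2: "\<forall>u\<in>S. \<forall>v\<in>S. u \<noteq> v \<longrightarrow> agr J u v = t" by (metis insert_Diff insert_iff of_nat_eq_iff right_minus_eq)
  show "(\<forall>j\<in>J. \<forall>b<q. real (cnt S j b) = real (card S) / real q) \<and> (\<forall>u\<in>S. \<forall>v\<in>S. u \<noteq> v \<longrightarrow> agr J u v = t)"
    using 1 2 by blast
qed

lemma sum_le_eq:
  fixes f :: "'a \<Rightarrow> nat"
  assumes "finite A" "\<forall>a\<in>A. f a \<le> c" "sum f A = card A * c"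
  shows "\<forall>a\<in>A. f a = c"
proof -
  have "(\<Sum>a\<in>A. c - f a) = (\<Sum>a\<in>A. c) - sum f A"
    by (rule sum_subtractf_nat) (use assms(2) in auto)
  also have "\<dots> = 0" using assms(3) by simp
  finally show ?thesis using assms by (simp add: sum_eq_0_iff) (meson le_antisym)
qed

locale code_loc =
  fixes \<mu> q :: nat and C :: "nat list set"
  assumes mu: "0 < \<mu>" and q2: "2 \<le> q" and inC: "C \<in> codes q (\<mu>*q) (\<mu>*q^2) (\<mu>*q-\<mu>)"
begin

lemma cardC: "card C = \<mu>*q^2" using inC unfolding codes_def by auto
lemma finC: "finite C" using cardC mu q2 by (metis card.infinite mult_is_0 not_numeral_le_zero power_not_zero gr_implies_not0)
lemma lenC: "w \<in> C \<Longrightarrow> length w = \<mu>*q" using inC unfolding codes_def words_def by auto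
lemma valC: "w \<in> C \<Longrightarrow> i < \<mu>*q \<Longrightarrow> w!i < q" using inC unfolding codes_def words_def by auto
lemma distC: "u \<in> C \<Longrightarrow> v \<in> C \<Longrightarrow> u \<noteq> v \<Longrightarrow> \<mu>*q-\<mu> \<le> hamming u v" using inC unfolding codes_def by auto

lemma agree_le:
  assumes "u \<in> C" "v \<in> C" "u \<noteq> v"
  shows "agr {0..<\<mu>*q} u v \<le> \<mu>"
proof -
  have h: "hamming u v = card {i\<in>{0..<\<mu>*q}. u!i \<noteq> v!i}"
    unfolding hamming_def using lenC[OF assms(1)] by (intro arg_cong[where f=card]) auto
  have "card {0..<\<mu>*q} = card ({i\<in>{0..<\<mu>*q}. u!i = v!i} \<union> {i\<in>{0..<\<mu>*q}. u!i \<noteq> v!i})"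
    by (intro arg_cong[where f=card]) auto
  also have "\<dots> = agr {0..<\<mu>*q} u v + hamming u v"
    unfolding agr_def h by (rule card_Un_disjoint) auto
  finally have "\<mu>*q = agr {0..<\<mu>*q} u v + hamming u v" by simp
  moreover have "\<mu> \<le> \<mu>*q" using q2 by simp
  ultimately show ?thesis using distC[OF assms] by linarith
qed

lemma short_setup:
  fixes a :: nat
  assumes i: "i < \<mu>*q"
  defines "S \<equiv> {w\<in>C. w!i = a}" and "J \<equiv> {0..<\<mu>*q} - {i}"
  shows "finite S" "finite J" "\<forall>u\<in>S. \<forall>j\<in>J. u!j < q" "card J = \<mu>*q - 1"
    "\<forall>u\<in>S. \<forall>v\<in>S. u \<noteq> v \<longrightarrow> agr J u v \<le> \<mu> - 1"
    "\<forall>u\<in>S. \<forall>v\<in>S. u \<noteq> v \<longrightarrow> agr {0..<\<mu>*q} u v = agr J u v + 1"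
    "card S = cnt C i a"
proof -
  show "finite S" unfolding S_def using finC by simp
  show "finite J" unfolding J_def by simp
  show "\<forall>u\<in>S. \<forall>j\<in>J. u!j < q" unfolding S_def J_def using valC by auto
  show "card J = \<mu>*q - 1" unfolding J_def using i by simp
  show "card S = cnt C i a" unfolding S_def cnt_def ..
  show *: "\<forall>u\<in>S. \<forall>v\<in>S. u \<noteq> v \<longrightarrow> agr {0..<\<mu>*q} u v = agr J u v + 1"
  proof (intro ballI impI)
    fix u v assume "u\<in>S" "v\<in>S" "u\<noteq>v"
    hence eq: "u!i = v!i" unfolding S_def by auto
    have "{j\<in>{0..<\<mu>*q}. u!j = v!j} = insert i {j\<in>J. u!j = v!j}" unfolding J_def using i eq by auto
    moreover have "i \<notin> {j\<in>J. u!j = v!j}" unfolding J_def by auto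
    moreover have "finite {j\<in>J. u!j = v!j}" unfolding J_def by auto
    ultimately show "agr {0..<\<mu>*q} u v = agr J u v + 1" unfolding agr_def by simp
  qed
  show "\<forall>u\<in>S. \<forall>v\<in>S. u \<noteq> v \<longrightarrow> agr J u v \<le> \<mu> - 1"
  proof (intro ballI impI)
    fix u v assume uv: "u\<in>S" "v\<in>S" "u\<noteq>v"
    hence "agr {0..<\<mu>*q} u v \<le> \<mu>" using agree_le unfolding S_def by auto
    thus "agr J u v \<le> \<mu> - 1" using * uv by force
  qed
qed

lemma plot_expr:
  fixes s :: real
  shows "s * real (\<mu>*q - 1) + s * (s - 1) * real (\<mu> - 1) - real (\<mu>*q - 1) * s^2 / real q
       = s * (real \<mu> * real q - s) * (real q - 1) / real q"
proof -
  have "real (\<mu>*q - 1) = real \<mu> * real q - 1" using mu q2 by (simp add: of_nat_diff Suc_leI)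
  moreover have "real (\<mu> - 1) = real \<mu> - 1" using mu by (simp add: of_nat_diff Suc_leI)
  moreover have "real q > 0" using q2 by simp
  ultimately show ?thesis by (simp add: field_simps power2_eq_square)
qed

lemma block_le:
  assumes i: "i < \<mu>*q"
  shows "cnt C i a \<le> \<mu>*q"
proof (rule ccontr)
  assume "\<not> cnt C i a \<le> \<mu>*q"
  hence "\<mu>*q < cnt C i a" by simp
  hence "real (\<mu>*q) < real (cnt C i a)" by (simp only: of_nat_less_iff)
  hence gt: "real (cnt C i a) > real \<mu> * real q" by simp
  note st = short_setup[OF i]
  have "0 \<le> real (cnt C i a) * real (\<mu>*q - 1) + real (cnt C i a) * (real (cnt C i a) - 1) * real (\<mu> - 1) - real (\<mu>*q - 1) * (real (cnt C i a))^2 / real q"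
    using plotkin_conseq(1)[OF st(1-3) _ st(5)] st(4,7) q2 by simp
  also have "\<dots> = real (cnt C i a) * (real \<mu> * real q - real (cnt C i a)) * (real q - 1) / real q"
    by (rule plot_expr)
  also have "\<dots> < 0"
  proof -
    have "real (cnt C i a) > 0" using gt mu q2 by (smt (verit) of_nat_0_le_iff mult_nonneg_nonneg)
    moreover have "real \<mu> * real q - real (cnt C i a) < 0" using gt by simp
    moreover have "real q - 1 > 0" "real q > 0" using q2 by auto
    ultimately show ?thesis by (simp add: divide_neg_pos mult_pos_neg mult_neg_pos)
  qed
  finally show False by simp
qed

lemma block_eq:
  assumes i: "i < \<mu>*q" and a: "a < q"
  shows "cnt C i a = \<mu>*q"
proof -
  have "(\<Sum>b<q. cnt C i b) = card C" using cnt_sum[of C i q] finC valC i by blast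
  also have "\<dots> = card {..<q} * (\<mu>*q)" using cardC by (simp add: power2_eq_square)
  finally have "\<forall>b\<in>{..<q}. cnt C i b = \<mu>*q"
    using block_le[OF i] by (intro sum_le_eq) auto
  thus ?thesis using a by simp
qed

lemma short_eq:
  assumes i: "i < \<mu>*q" and a: "a < q"
  shows "\<forall>j\<in>{0..<\<mu>*q}-{i}. \<forall>b<q. card {w\<in>C. w!i = a \<and> w!j = b} = \<mu>"
    and "\<forall>u\<in>C. \<forall>v\<in>C. u \<noteq> v \<longrightarrow> u!i = a \<longrightarrow> v!i = a \<longrightarrow> agr {0..<\<mu>*q} u v = \<mu>"
proof -
  note st = short_setup[OF i]
  have be: "cnt C i a = \<mu>*q" by (rule block_eq[OF i a])
  have "real (cnt C i a) * real (\<mu>*q - 1) + real (cnt C i a) * (real (cnt C i a) - 1) * real (\<mu> - 1) - real (\<mu>*q - 1) * (real (cnt C i a))^2 / real q = 0"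
    unfolding plot_expr be by simp
  hence H: "(\<forall>j\<in>{0..<\<mu>*q}-{i}. \<forall>b<q. real (cnt {w\<in>C. w!i = a} j b) = real (card {w\<in>C. w!i = a}) / real q) \<and>
      (\<forall>u\<in>{w\<in>C. w!i = a}. \<forall>v\<in>{w\<in>C. w!i = a}. u \<noteq> v \<longrightarrow> agr ({0..<\<mu>*q}-{i}) u v = \<mu> - 1)"
    using plotkin_conseq(2)[OF st(1-3) _ st(5)] st(4,7) q2 by simp
  have cS: "real (card {w\<in>C. w!i = a}) / real q = real \<mu>" using st(7) be q2 by simp
  show "\<forall>j\<in>{0..<\<mu>*q}-{i}. \<forall>b<q. card {w\<in>C. w!i = a \<and> w!j = b} = \<mu>"
  proof (intro ballI allI impI)
    fix j b assume "j \<in> {0..<\<mu>*q}-{i}" "b < q"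
    hence "real (cnt {w\<in>C. w!i = a} j b) = real \<mu>" using H cS by simp
    moreover have "cnt {w\<in>C. w!i = a} j b = card {w\<in>C. w!i = a \<and> w!j = b}" unfolding cnt_def
      by (intro arg_cong[where f=card]) auto
    ultimately show "card {w\<in>C. w!i = a \<and> w!j = b} = \<mu>" by simp
  qed
  show "\<forall>u\<in>C. \<forall>v\<in>C. u \<noteq> v \<longrightarrow> u!i = a \<longrightarrow> v!i = a \<longrightarrow> agr {0..<\<mu>*q} u v = \<mu>"
  proof (intro ballI impI)
    fix u v assume uv: "u\<in>C" "v\<in>C" "u\<noteq>v" "u!i = a" "v!i = a"
    hence "agr ({0..<\<mu>*q}-{i}) u v = \<mu> - 1" using H by auto
    thus "agr {0..<\<mu>*q} u v = \<mu>" using st(6) uv mu by auto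
  qed
qed

lemma pair_card:
  assumes "i < \<mu>*q" "j < \<mu>*q" "i \<noteq> j" "a < q" "b < q"
  shows "card {w\<in>C. w!i = a \<and> w!j = b} = \<mu>"
  using short_eq(1)[OF assms(1,4)] assms by auto

lemma agree_mu:
  assumes "u \<in> C" "v \<in> C" "u \<noteq> v" "i < \<mu>*q" "u!i = v!i"
  shows "agr {0..<\<mu>*q} u v = \<mu>"
  using short_eq(2)[OF assms(4) valC[OF assms(1,4)]] assms by auto

end

lemma agr_sym: "agr J u v = agr J v u" unfolding agr_def by (metis (full_types))

lemma sum_if_const: "finite A \<Longrightarrow> (\<Sum>v\<in>A. if P v then k else 0) = k * card {v\<in>A. P v}"
  by (simp add: card_filter_sum sum_distrib_left if_distrib cong: if_cong)

context code_loc begin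

definition meet :: "nat list \<Rightarrow> nat list \<Rightarrow> bool" where
  "meet u v \<longleftrightarrow> (\<exists>i<\<mu>*q. u!i = v!i)"

lemma meet_sym: "meet u v = meet v u" unfolding meet_def by auto
lemma n_pos: "0 < \<mu>*q" using mu q2 by simp
lemma meet_refl: "meet u u" unfolding meet_def using n_pos by blast

lemma agree_cases:
  assumes "u \<in> C" "v \<in> C" "u \<noteq> v"
  shows "agr {0..<\<mu>*q} u v = (if meet u v then \<mu> else 0)"
proof (cases "meet u v")
  case True
  then obtain i where "i < \<mu>*q" "u!i = v!i" unfolding meet_def by auto
  thus ?thesis using agree_mu[OF assms] True by simp
next
  case False
  hence "{j\<in>{0..<\<mu>*q}. u!j = v!j} = {}" unfolding meet_def by auto
  thus ?thesis using False unfolding agr_def by simp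
qed

lemma agr_as_sum: "agr {0..<\<mu>*q} u v = (\<Sum>i\<in>{0..<\<mu>*q}. if u!i = v!i then 1 else 0)"
  unfolding agr_def by (rule card_filter_sum) simp

lemma row_sum:
  assumes c: "c \<in> C"
  shows "(\<Sum>v\<in>C. agr {0..<\<mu>*q} c v) = (\<mu>*q) * (\<mu>*q)"
proof -
  have "(\<Sum>v\<in>C. agr {0..<\<mu>*q} c v) = (\<Sum>v\<in>C. \<Sum>i\<in>{0..<\<mu>*q}. if c!i = v!i then 1 else 0)"
    unfolding agr_as_sum ..
  also have "\<dots> = (\<Sum>i\<in>{0..<\<mu>*q}. \<Sum>v\<in>C. if c!i = v!i then 1 else 0)" by (rule sum.swap)
  also have "\<dots> = (\<Sum>i\<in>{0..<\<mu>*q}. \<mu>*q)"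
  proof (intro sum.cong refl)
    fix i assume i: "i \<in> {0..<\<mu>*q}"
    have "(\<Sum>v\<in>C. if c!i = v!i then 1 else 0) = card {v\<in>C. v!i = c!i}"
      using finC by (simp add: card_filter_sum eq_commute)
    also have "\<dots> = cnt C i (c!i)" unfolding cnt_def ..
    also have "\<dots> = \<mu>*q" using block_eq i valC[OF c] by auto
    finally show "(\<Sum>v\<in>C. if c!i = v!i then 1 else 0) = \<mu>*q" .
  qed
  finally show ?thesis by simp
qed

lemma meet_card:
  assumes c: "c \<in> C"
  shows "card {v\<in>C-{c}. meet c v} = \<mu>*q^2 - q"
proof -
  have "(\<Sum>v\<in>C. agr {0..<\<mu>*q} c v) = agr {0..<\<mu>*q} c c + (\<Sum>v\<in>C-{c}. agr {0..<\<mu>*q} c v)"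
    using finC c by (rule sum.remove)
  also have "(\<Sum>v\<in>C-{c}. agr {0..<\<mu>*q} c v) = (\<Sum>v\<in>C-{c}. if meet c v then \<mu> else 0)"
  proof (intro sum.cong refl)
    fix v assume "v \<in> C-{c}"
    thus "agr {0..<\<mu>*q} c v = (if meet c v then \<mu> else 0)" using agree_cases[OF c, of v] by auto
  qed
  also have "\<dots> = \<mu> * card {v\<in>C-{c}. meet c v}" using finC by (simp add: sum_if_const)
  finally have "\<mu>*q + \<mu> * card {v\<in>C-{c}. meet c v} = (\<mu>*q)*(\<mu>*q)" using row_sum[OF c] by (simp add: agr_self)
  hence "\<mu> * (q + card {v\<in>C-{c}. meet c v}) = \<mu> * (\<mu>*q*q)" by (simp add: algebra_simps)
  hence "q + card {v\<in>C-{c}. meet c v} = \<mu>*q*q" using mu by simp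
  thus ?thesis by (simp add: power2_eq_square)
qed

lemma nonmeet_card:
  assumes c: "c \<in> C"
  shows "card {v\<in>C-{c}. \<not> meet c v} = q - 1"
proof -
  have "C = insert c ({v\<in>C-{c}. meet c v} \<union> {v\<in>C-{c}. \<not> meet c v})" using c by auto
  hence "card C = Suc (card {v\<in>C-{c}. meet c v} + card {v\<in>C-{c}. \<not> meet c v})"
  proof -
    have f: "finite {v\<in>C-{c}. meet c v}" "finite {v\<in>C-{c}. \<not> meet c v}" using finC by auto
    have "card ({v\<in>C-{c}. meet c v} \<union> {v\<in>C-{c}. \<not> meet c v}) = card {v\<in>C-{c}. meet c v} + card {v\<in>C-{c}. \<not> meet c v}"
      using f by (intro card_Un_disjoint) auto
    moreover have "c \<notin> {v\<in>C-{c}. meet c v} \<union> {v\<in>C-{c}. \<not> meet c v}" by auto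
    ultimately show ?thesis using f \<open>C = _\<close> by (metis card_insert_disjoint finite_UnI)
  qed
  hence "\<mu>*q^2 = Suc (\<mu>*q^2 - q + card {v\<in>C-{c}. \<not> meet c v})" using cardC meet_card[OF c] by simp
  moreover have "q \<le> \<mu>*q^2" using mu by (simp add: power2_eq_square)
  ultimately show ?thesis by linarith
qed

definition pc :: "nat list \<Rightarrow> nat list set" where
  "pc c = {v\<in>C. v = c \<or> \<not> meet c v}"

lemma pc_card: "c \<in> C \<Longrightarrow> card (pc c) = q"
proof -
  assume c: "c \<in> C"
  have "pc c = insert c {v\<in>C-{c}. \<not> meet c v}" unfolding pc_def using c by auto
  thus ?thesis using nonmeet_card[OF c] finC q2 by simp
qed

lemma pc_self: "c \<in> C \<Longrightarrow> c \<in> pc c" unfolding pc_def by auto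
lemma pc_sub: "pc c \<subseteq> C" unfolding pc_def by auto

end

context code_loc begin

lemma second:
  assumes c: "c \<in> C" and d: "d \<in> C"
  shows "(\<Sum>v\<in>C. agr {0..<\<mu>*q} c v * agr {0..<\<mu>*q} d v) = \<mu>*q * agr {0..<\<mu>*q} c d + (\<mu>*q)*(\<mu>*q - 1)*\<mu>"
proof -
  let ?N = "{0..<\<mu>*q}"
  have "(\<Sum>v\<in>C. agr ?N c v * agr ?N d v) = (\<Sum>v\<in>C. \<Sum>i\<in>?N. \<Sum>j\<in>?N. (if c!i = v!i then 1 else 0) * (if d!j = v!j then 1 else 0))"
    unfolding agr_as_sum sum_product ..
  also have "\<dots> = (\<Sum>i\<in>?N. \<Sum>v\<in>C. \<Sum>j\<in>?N. (if c!i = v!i then 1 else 0) * (if d!j = v!j then 1 else 0))"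
    by (rule sum.swap)
  also have "\<dots> = (\<Sum>i\<in>?N. \<Sum>j\<in>?N. \<Sum>v\<in>C. (if c!i = v!i then 1 else 0) * (if d!j = v!j then 1 else 0))"
    by (rule sum.cong[OF refl], rule sum.swap)
  also have "\<dots> = (\<Sum>i\<in>?N. \<Sum>j\<in>?N. card {v\<in>C. v!i = c!i \<and> v!j = d!j})"
  proof (intro sum.cong refl)
    fix i j
    have "(\<Sum>v\<in>C. (if c!i = v!i then 1 else 0) * (if d!j = v!j then 1 else (0::nat))) = (\<Sum>v\<in>C. if v!i = c!i \<and> v!j = d!j then 1 else 0)"
      by (intro sum.cong refl) auto
    also have "\<dots> = card {v\<in>C. v!i = c!i \<and> v!j = d!j}" using finC by (simp add: card_filter_sum)
    finally show "(\<Sum>v\<in>C. (if c!i = v!i then 1 else 0) * (if d!j = v!j then 1 else (0::nat))) = card {v\<in>C. v!i = c!i \<and> v!j = d!j}" .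
  qed
  also have "\<dots> = (\<Sum>i\<in>?N. (if c!i = d!i then \<mu>*q else 0) + (\<mu>*q - 1)*\<mu>)"
  proof (intro sum.cong refl)
    fix i assume i: "i \<in> ?N"
    have "(\<Sum>j\<in>?N. card {v\<in>C. v!i = c!i \<and> v!j = d!j}) = card {v\<in>C. v!i = c!i \<and> v!i = d!i} + (\<Sum>j\<in>?N-{i}. card {v\<in>C. v!i = c!i \<and> v!j = d!j})"
      using i by (intro sum.remove) auto
    also have "card {v\<in>C. v!i = c!i \<and> v!i = d!i} = (if c!i = d!i then \<mu>*q else 0)"
    proof (cases "c!i = d!i")
      case True
      hence "{v\<in>C. v!i = c!i \<and> v!i = d!i} = {v\<in>C. v!i = c!i}" by auto
      thus ?thesis using True block_eq[of i "c!i"] i valC[OF c, of i] unfolding cnt_def by simp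
    next
      case False
      hence "{v\<in>C. v!i = c!i \<and> v!i = d!i} = {}" by auto
      thus ?thesis using False by (simp only: card.empty if_False)
    qed
    also have "(\<Sum>j\<in>?N-{i}. card {v\<in>C. v!i = c!i \<and> v!j = d!j}) = (\<Sum>j\<in>?N-{i}. \<mu>)"
      using i valC[OF c] valC[OF d] by (intro sum.cong refl pair_card) auto
    also have "\<dots> = (\<mu>*q - 1)*\<mu>" using i by simp
    finally show "(\<Sum>j\<in>?N. card {v\<in>C. v!i = c!i \<and> v!j = d!j}) = (if c!i = d!i then \<mu>*q else 0) + (\<mu>*q - 1)*\<mu>" .
  qed
  also have "\<dots> = (\<Sum>i\<in>?N. if c!i = d!i then \<mu>*q else 0) + (\<mu>*q)*((\<mu>*q - 1)*\<mu>)"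
    by (simp add: sum.distrib)
  also have "(\<Sum>i\<in>?N. if c!i = d!i then \<mu>*q else 0) = \<mu>*q * agr ?N c d"
    unfolding agr_def by (simp add: sum_if_const)
  finally show ?thesis by (simp add: algebra_simps)
qed

lemma agree_vals:
  assumes "u \<in> C" "v \<in> C"
  shows "agr {0..<\<mu>*q} u v = \<mu> \<or> agr {0..<\<mu>*q} u v = 0 \<or> u = v"
  using agree_cases[OF assms] by auto

lemma no_trans:
  assumes c: "c \<in> C" and d: "d \<in> C" and e: "e \<in> C" and cd: "c \<noteq> d" "meet c d"
    and ce: "\<not> meet c e" and de: "\<not> meet d e"
  shows False
proof -
  let ?N = "{0..<\<mu>*q}"
  define A where "A v = int (agr ?N c v)" for v
  define B where "B v = int (agr ?N d v)" for v
  define m where "m = int \<mu>"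
  define Q where "Q = int q"
  define R where "R = C - {c,d}"
  have ec: "e \<noteq> c" using ce meet_refl by auto
  have ed: "e \<noteq> d" using de meet_refl by auto
  have eR: "e \<in> R" unfolding R_def using e ec ed by auto
  have finR: "finite R" unfolding R_def using finC by simp
  have rm: "sum f C = f c + f d + sum f R" for f :: "nat list \<Rightarrow> int"
  proof -
    have "sum f C = f c + sum f (C - {c})" using finC c by (rule sum.remove)
    also have "sum f (C - {c}) = f d + sum f (C - {c} - {d})" using finC d cd by (intro sum.remove) auto
    finally show ?thesis unfolding R_def by (simp add: Diff_insert2[symmetric] insert_commute)
  qed
  have acd: "agr ?N c d = \<mu>" using agree_cases[OF c d cd(1)] cd(2) by simp
  have Acc: "A c = m*Q" unfolding A_def m_def Q_def by (simp add: agr_self)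
  have Bdd: "B d = m*Q" unfolding B_def m_def Q_def by (simp add: agr_self)
  have Acd: "A d = m" unfolding A_def m_def using acd by simp
  have Bdc: "B c = m" unfolding B_def m_def using acd agr_sym[of ?N d c] by simp
  have "int (\<Sum>v\<in>C. agr ?N c v) = sum A C" unfolding A_def by simp
  hence sA: "sum A C = m*Q*(m*Q)" unfolding m_def Q_def using row_sum[OF c] by simp
  have "int (\<Sum>v\<in>C. agr ?N d v) = sum B C" unfolding B_def by simp
  hence sB: "sum B C = m*Q*(m*Q)" unfolding m_def Q_def using row_sum[OF d] by simp
  have "int (\<mu>*q - 1) = m*Q - 1" unfolding m_def Q_def using n_pos by (simp add: of_nat_diff)
  moreover have "int (\<Sum>v\<in>C. agr ?N c v * agr ?N d v) = (\<Sum>v\<in>C. A v * B v)" unfolding A_def B_def by simp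
  ultimately have sAB: "(\<Sum>v\<in>C. A v * B v) = m*Q*m + m*Q*(m*Q-1)*m"
    using second[OF c d] acd unfolding m_def Q_def by simp
  have "card R = card C - 2" unfolding R_def using c d cd finC by (simp add: card_Diff_subset)
  moreover have "2 \<le> card C" using card_mono[OF finC, of "{c,d}"] c d cd by simp
  ultimately have cR: "int (card R) = m*Q*Q - 2" unfolding m_def Q_def using cardC
    by (simp add: of_nat_diff power2_eq_square)
  have vals: "(A v = 0 \<or> A v = m) \<and> (B v = 0 \<or> B v = m)" if "v \<in> R" for v
    using that agree_vals[OF c, of v] agree_vals[OF d, of v] unfolding R_def A_def B_def m_def by auto
  have hnn: "0 \<le> (A v - m) * (B v - m)" if "v \<in> R" for v
    using vals[OF that] m_def by auto
  have he: "(A e - m) * (B e - m) = m*m"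
  proof -
    have "agr ?N c e = 0" using agree_cases[OF c e] ec ce by auto
    moreover have "agr ?N d e = 0" using agree_cases[OF d e] ed de by auto
    ultimately show ?thesis unfolding A_def B_def by simp
  qed
  have "(\<Sum>v\<in>R. (A v - m) * (B v - m)) = (\<Sum>v\<in>R. A v * B v) - m * sum A R - m * sum B R + m*m*int (card R)"
    by (simp add: algebra_simps sum.distrib sum_subtractf sum_distrib_left)
  also have "\<dots> = 0"
  proof -
    have X: "(\<Sum>v\<in>R. A v * B v) = (m*Q*m + m*Q*(m*Q-1)*m) - m*Q*m - m*m*Q" using rm[of "\<lambda>v. A v * B v"] sAB Acc Bdd Acd Bdc by simp
    have a: "sum A R = m*Q*(m*Q) - m*Q - m" using rm[of A] sA Acc Acd by simp
    have b: "sum B R = m*Q*(m*Q) - m - m*Q" using rm[of B] sB Bdd Bdc by simp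
    show ?thesis unfolding X a b cR by (simp add: algebra_simps)
  qed
  finally have z: "(\<Sum>v\<in>R. (A v - m) * (B v - m)) = 0" .
  have "(A e - m) * (B e - m) \<le> (\<Sum>v\<in>R. (A v - m) * (B v - m))"
    using finR eR hnn by (intro member_le_sum) auto
  hence "m*m \<le> 0" using z he by simp
  moreover have "m > 0" unfolding m_def using mu by simp
  ultimately show False using mult_pos_pos[of m m] by linarith
qed

lemma pc_eq:
  assumes c: "c \<in> C" and d: "d \<in> pc c"
  shows "pc d = pc c"
proof -
  have dC: "d \<in> C" using d unfolding pc_def by auto
  have sub: "pc y \<subseteq> pc x" if x: "x \<in> C" and y: "y \<in> pc x" for x y
  proof
    fix v assume v: "v \<in> pc y"
    have yC: "y \<in> C" "v \<in> C" using y v unfolding pc_def by auto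
    show "v \<in> pc x"
    proof (cases "y = x")
      case True thus ?thesis using v by simp
    next
      case yx: False
      hence nxy: "\<not> meet x y" using y unfolding pc_def by auto
      show ?thesis
      proof (cases "v = y \<or> v = x")
        case True thus ?thesis using y x pc_self by auto
      next
        case False
        hence nyv: "\<not> meet y v" using v unfolding pc_def by auto
        have "\<not> meet x v"
        proof
          assume "meet x v"
          moreover have "\<not> meet v y" using nyv meet_sym[of y v] by simp
          ultimately show False using no_trans[OF x yC(2) yC(1) _ _ nxy] False by blast
        qed
        thus ?thesis using yC unfolding pc_def by auto
      qed
    qed
  qed
  have "c \<in> pc d" using d c unfolding pc_def by (auto simp: meet_sym)
  show ?thesis by (rule equalityI[OF sub[OF c d] sub[OF dC \<open>c \<in> pc d\<close>]])
qed

end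

definition blk :: "(nat \<Rightarrow> nat list) \<Rightarrow> nat set \<Rightarrow> nat \<times> nat \<Rightarrow> nat set" where
  "blk h X = (\<lambda>(i,a). {x\<in>X. h x ! i = a})"

lemma blk_simp: "blk h X (i,a) = {x\<in>X. h x ! i = a}" unfolding blk_def by simp

lemma bij_filter:
  assumes "bij_betw h X C"
  shows "card {x\<in>X. P (h x)} = card {w\<in>C. P w}"
proof -
  have "h ` {x\<in>X. P (h x)} = {w\<in>C. P w}" using assms unfolding bij_betw_def by auto
  moreover have "inj_on h {x\<in>X. P (h x)}" using assms unfolding bij_betw_def by (auto intro: inj_on_subset)
  ultimately show ?thesis by (metis card_image)
qed

lemma part_card:
  assumes "partition_on A P" "finite A" "\<forall>p\<in>P. card p = k"
  shows "card A = card P * k"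
proof -
  have "\<And>p. p \<in> P \<Longrightarrow> finite p" using assms(1,2) unfolding partition_on_def by (meson Union_upper finite_subset)
  hence "card A = (\<Sum>p\<in>P. card p)" using product_partition[OF assms(1)] by blast
  also have "\<dots> = card P * k" using assms(3) by simp
  finally show ?thesis .
qed

context code_loc begin

lemma blk_card:
  assumes h: "bij_betw h X C" and i: "i < \<mu>*q" and a: "a < q"
  shows "card (blk h X (i,a)) = \<mu>*q"
  using bij_filter[OF h, of "\<lambda>w. w!i = a"] block_eq[OF i a] unfolding cnt_def blk_simp by simp

lemma blk_inter:
  assumes h: "bij_betw h X C" and ij: "i < \<mu>*q" "j < \<mu>*q" "i \<noteq> j" and ab: "a < q" "b < q"
  shows "card (blk h X (i,a) \<inter> blk h X (j,b)) = \<mu>"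
proof -
  have "blk h X (i,a) \<inter> blk h X (j,b) = {x\<in>X. h x ! i = a \<and> h x ! j = b}" unfolding blk_simp by auto
  thus ?thesis using bij_filter[OF h, of "\<lambda>w. w!i = a \<and> w!j = b"] pair_card[OF ij ab] by simp
qed

lemma blk_ne:
  assumes h: "bij_betw h X C" and i: "i < \<mu>*q" and a: "a < q"
  shows "blk h X (i,a) \<noteq> {}"
  using blk_card[OF assms] n_pos by (metis card.empty less_numeral_extra(3))

lemma blk_inj:
  assumes h: "bij_betw h X C" and "(i,a) \<in> {0..<\<mu>*q}\<times>{0..<q}" "(j,b) \<in> {0..<\<mu>*q}\<times>{0..<q}"
    and eq: "blk h X (i,a) = blk h X (j,b)"
  shows "i = j \<and> a = b"
proof (cases "i = j")
  case True
  show ?thesis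
  proof (rule ccontr)
    assume "\<not> (i = j \<and> a = b)"
    hence "a \<noteq> b" using True by simp
    hence "blk h X (i,a) \<inter> blk h X (j,b) = {}" using True unfolding blk_simp by auto
    thus False using eq blk_ne[OF h] assms(2) by auto
  qed
next
  case False
  have "card (blk h X (i,a) \<inter> blk h X (j,b)) = \<mu>" using blk_inter[OF h _ _ False] assms(2,3) by auto
  moreover have "card (blk h X (i,a)) = \<mu>*q" using blk_card[OF h] assms(2) by auto
  ultimately have "\<mu> = \<mu>*q" using eq by simp
  thus ?thesis using mu q2 by simp
qed

lemma pairs_card:
  assumes h: "bij_betw h X C" and x: "x \<in> X" and y: "y \<in> X"
  shows "card {b\<in>blk h X ` ({0..<\<mu>*q}\<times>{0..<q}). x \<in> b \<and> y \<in> b} = agr {0..<\<mu>*q} (h x) (h y)"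
proof -
  let ?I = "{0..<\<mu>*q}\<times>{0..<q}"
  let ?K = "{i\<in>{0..<\<mu>*q}. h x ! i = h y ! i}"
  have hx: "h x \<in> C" using h x unfolding bij_betw_def by auto
  have "{b\<in>blk h X ` ?I. x \<in> b \<and> y \<in> b} = blk h X ` ((\<lambda>i. (i, h x ! i)) ` ?K)"
  proof
    show "{b\<in>blk h X ` ?I. x \<in> b \<and> y \<in> b} \<subseteq> blk h X ` ((\<lambda>i. (i, h x ! i)) ` ?K)"
    proof
      fix b assume "b \<in> {b\<in>blk h X ` ?I. x \<in> b \<and> y \<in> b}"
      then obtain i a where "(i,a) \<in> ?I" "b = blk h X (i,a)" "x \<in> b" "y \<in> b" by auto
      thus "b \<in> blk h X ` ((\<lambda>i. (i, h x ! i)) ` ?K)" by (auto simp: blk_simp intro!: image_eqI)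
    qed
  next
    show "blk h X ` ((\<lambda>i. (i, h x ! i)) ` ?K) \<subseteq> {b\<in>blk h X ` ?I. x \<in> b \<and> y \<in> b}"
    proof
      fix b assume "b \<in> blk h X ` ((\<lambda>i. (i, h x ! i)) ` ?K)"
      then obtain i where i: "i < \<mu>*q" "h x ! i = h y ! i" "b = blk h X (i, h x ! i)" by auto
      have "(i, h x ! i) \<in> ?I" using i(1) valC[OF hx i(1)] by simp
      moreover have "x \<in> b" "y \<in> b" using i x y by (auto simp: blk_simp)
      ultimately show "b \<in> {b\<in>blk h X ` ?I. x \<in> b \<and> y \<in> b}" using i by auto
    qed
  qed
  moreover have "inj_on (blk h X) ?I" using blk_inj[OF h] by (intro inj_onI) auto
  moreover have "(\<lambda>i. (i, h x ! i)) ` ?K \<subseteq> ?I"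
  proof
    fix p assume "p \<in> (\<lambda>i. (i, h x ! i)) ` ?K"
    then obtain i where "i < \<mu>*q" "p = (i, h x ! i)" by auto
    thus "p \<in> ?I" using valC[OF hx, of i] by simp
  qed
  ultimately have "card {b\<in>blk h X ` ?I. x \<in> b \<and> y \<in> b} = card ((\<lambda>i. (i, h x ! i)) ` ?K)"
    using card_image[OF inj_on_subset] by simp
  also have "\<dots> = card ?K" by (rule card_image) (auto intro: inj_onI)
  finally show ?thesis unfolding agr_def .
qed

end

context code_loc begin

lemma code_net:
  assumes h: "bij_betw h X C"
  shows "symmetric_net \<mu> q X (blk h X ` ({0..<\<mu>*q}\<times>{0..<q}))"
proof -
  let ?I = "{0..<\<mu>*q}\<times>{0..<q}"
  let ?B = "blk h X ` ?I"
  define cl where "cl i = (\<lambda>a. blk h X (i,a)) ` {0..<q}" for i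
  define PB where "PB = cl ` {0..<\<mu>*q}"
  have finX: "finite X" using h finC bij_betw_finite by blast
  have cardX: "card X = \<mu>*q^2" using h cardC bij_betw_same_card by metis
  have hX: "x \<in> X \<Longrightarrow> h x \<in> C" for x using h unfolding bij_betw_def by auto
  have injh: "inj_on h X" using h unfolding bij_betw_def by auto
  have blkinj: "inj_on (blk h X) ?I" using blk_inj[OF h] by (intro inj_onI) auto
  have cl_ne: "cl i \<noteq> {}" for i unfolding cl_def using q2 by auto
  have cl_inj: "i = j" if "i < \<mu>*q" "j < \<mu>*q" "cl i = cl j" for i j
  proof -
    have "blk h X (i,0) \<in> cl j" using that q2 unfolding cl_def by (metis atLeastLessThan_iff image_eqI le0 less_le_trans pos2)
    then obtain b where "b < q" "blk h X (i,0) = blk h X (j,b)" unfolding cl_def by auto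
    thus ?thesis using blk_inj[OF h, of i 0 j b] that q2 by auto
  qed
  have cl_disj: "cl i \<inter> cl j = {}" if "i < \<mu>*q" "j < \<mu>*q" "i \<noteq> j" for i j
    using blk_inj[OF h] that unfolding cl_def by fastforce
  have union_PB: "\<Union>PB = ?B" unfolding PB_def cl_def by auto
  have part_B: "partition_on ?B PB"
  proof (rule partition_onI)
    show "\<Union>PB = ?B" by (rule union_PB)
    show "disjnt p p'" if H: "p \<in> PB" "p' \<in> PB" "p \<noteq> p'" for p p'
    proof -
      obtain i j where "i < \<mu>*q" "j < \<mu>*q" "p = cl i" "p' = cl j" using H(1,2) unfolding PB_def by auto
      moreover have "i \<noteq> j" using H(3) calculation by auto
      ultimately show ?thesis using cl_disj unfolding disjnt_def by simp
    qed
    show "{} \<notin> PB" unfolding PB_def using cl_ne by auto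
  qed
  have cardPB: "card PB = \<mu>*q" unfolding PB_def using cl_inj
    by (subst card_image) (auto intro: inj_onI)
  have part_cl: "partition_on X (cl i)" if i: "i < \<mu>*q" for i
  proof (rule partition_onI)
    show "\<Union>(cl i) = X"
    proof
      show "\<Union>(cl i) \<subseteq> X" unfolding cl_def blk_simp by auto
      show "X \<subseteq> \<Union>(cl i)"
      proof
        fix x assume x: "x \<in> X"
        hence "h x ! i < q" using valC[OF hX[OF x] i] by simp
        thus "x \<in> \<Union>(cl i)" unfolding cl_def blk_simp using x by auto
      qed
    qed
    show "disjnt p p'" if "p \<in> cl i" "p' \<in> cl i" "p \<noteq> p'" for p p'
      using that unfolding cl_def disjnt_def blk_simp by auto
    show "{} \<notin> cl i" unfolding cl_def using blk_ne[OF h i] by (metis (no_types, lifting) atLeastLessThan_iff imageE)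
  qed
  have PX_ok: "\<exists>PX :: nat set set.
        partition_on X PX \<and> finite PX \<and> card PX = \<mu> * q \<and>
        (\<forall>P\<in>PX. card P = q) \<and>
        (\<forall>P\<in>PX. \<forall>P'\<in>PX. \<forall>x\<in>P. \<forall>y\<in>P'.
            (P \<noteq> P' \<longrightarrow> card {b\<in>?B. x \<in> b \<and> y \<in> b} = \<mu>) \<and>
            (P = P' \<and> x \<noteq> y \<longrightarrow> card {b\<in>?B. x \<in> b \<and> y \<in> b} = 0))"
  proof -
    define cls where "cls x = {y\<in>X. h y \<in> pc (h x)}" for x
    define PX where "PX = cls ` X"
    have cls_self: "x \<in> cls x" if "x \<in> X" for x using that pc_self[OF hX] unfolding cls_def by auto
    have cls_eq: "cls y = cls x" if "x \<in> X" "y \<in> cls x" for x y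
      using pc_eq[OF hX[OF that(1)]] that unfolding cls_def by auto
    have cls_card: "card (cls x) = q" if "x \<in> X" for x
      unfolding cls_def bij_filter[OF h, of "\<lambda>w. w \<in> pc (h x)"]
      using pc_card[OF hX[OF that]] pc_sub by (metis Collect_mem_eq Int_absorb1 Int_def)
    have partX: "partition_on X PX"
    proof (rule partition_onI)
      show "\<Union>PX = X" unfolding PX_def using cls_self unfolding cls_def by auto
      show "disjnt p p'" if H: "p \<in> PX" "p' \<in> PX" "p \<noteq> p'" for p p'
      proof -
        obtain x x' where xx: "x \<in> X" "x' \<in> X" "p = cls x" "p' = cls x'" using H(1,2) unfolding PX_def by auto
        show ?thesis unfolding disjnt_def
        proof (rule ccontr)
          assume "p \<inter> p' \<noteq> {}"
          then obtain y where "y \<in> cls x" "y \<in> cls x'" using xx by auto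
          hence "cls x = cls x'" using cls_eq xx by metis
          thus False using H xx by simp
        qed
      qed
      show "{} \<notin> PX" unfolding PX_def using cls_self by auto
    qed
    have finPX: "finite PX" unfolding PX_def using finX by simp
    have "card X = card PX * q" using part_card[OF partX finX] cls_card unfolding PX_def by auto
    hence cardPX: "card PX = \<mu>*q" using cardX q2 by (simp add: power2_eq_square)
    have s3: "(P \<noteq> P' \<longrightarrow> card {b\<in>?B. x \<in> b \<and> y \<in> b} = \<mu>) \<and>
            (P = P' \<and> x \<noteq> y \<longrightarrow> card {b\<in>?B. x \<in> b \<and> y \<in> b} = 0)"
      if PP: "P \<in> PX" "P' \<in> PX" "x \<in> P" "y \<in> P'" for P P' x y
    proof -
      obtain z z' where zz: "z \<in> X" "z' \<in> X" "P = cls z" "P' = cls z'" using PP(1,2) unfolding PX_def by auto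
      have xy: "x \<in> X" "y \<in> X" using PP(3,4) zz unfolding cls_def by auto
      have Px: "P = cls x" using cls_eq[OF zz(1)] PP(3) zz(3) by simp
      have Py: "P' = cls y" using cls_eq[OF zz(2)] PP(4) zz(4) by simp
      have cnt: "card {b\<in>?B. x \<in> b \<and> y \<in> b} = agr {0..<\<mu>*q} (h x) (h y)" by (rule pairs_card[OF h xy])
      show ?thesis
      proof (intro conjI impI)
        assume "P \<noteq> P'"
        hence "y \<notin> cls x" using cls_eq[OF xy(1)] Px Py by metis
        hence "h y \<notin> pc (h x)" using xy unfolding cls_def by auto
        hence "h y \<noteq> h x" "meet (h x) (h y)" using pc_self[OF hX[OF xy(1)]] hX[OF xy(2)] unfolding pc_def by auto
        thus "card {b\<in>?B. x \<in> b \<and> y \<in> b} = \<mu>" unfolding cnt using agree_cases[OF hX[OF xy(1)] hX[OF xy(2)]] by auto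
      next
        assume "P = P' \<and> x \<noteq> y"
        hence "y \<in> cls x" using cls_self[OF xy(2)] Px Py by simp
        hence "h y \<in> pc (h x)" unfolding cls_def by auto
        moreover have "h y \<noteq> h x" using injh xy \<open>P = P' \<and> x \<noteq> y\<close> unfolding inj_on_def by auto
        ultimately have "\<not> meet (h x) (h y)" unfolding pc_def by auto
        thus "card {b\<in>?B. x \<in> b \<and> y \<in> b} = 0" unfolding cnt using agree_cases[OF hX[OF xy(1)] hX[OF xy(2)]] \<open>h y \<noteq> h x\<close> by auto
      qed
    qed
    show ?thesis using partX finPX cardPX cls_card s3 unfolding PX_def by blast
  qed
  show ?thesis unfolding symmetric_net_def
  proof (intro conjI)
    show "finite X" by (rule finX)
    show "card X = \<mu>*q^2" by (rule cardX)
    show "\<forall>b\<in>?B. b \<subseteq> X \<and> card b = \<mu>*q" using blk_card[OF h] by (auto simp: blk_simp)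
    show "\<exists>PB :: nat set set set.
        partition_on ?B PB \<and> finite PB \<and> card PB = \<mu> * q \<and>
        (\<forall>c\<in>PB. partition_on X c) \<and>
        (\<forall>c\<in>PB. \<forall>c'\<in>PB. c \<noteq> c' \<longrightarrow>
            (\<forall>b\<in>c. \<forall>b'\<in>c'. card (b \<inter> b') = \<mu>))"
    proof (intro exI[of _ PB] conjI)
      show "partition_on ?B PB" by (rule part_B)
      show "finite PB" unfolding PB_def by simp
      show "card PB = \<mu>*q" by (rule cardPB)
      show "\<forall>c\<in>PB. partition_on X c" unfolding PB_def using part_cl by auto
      show "\<forall>c\<in>PB. \<forall>c'\<in>PB. c \<noteq> c' \<longrightarrow> (\<forall>b\<in>c. \<forall>b'\<in>c'. card (b \<inter> b') = \<mu>)"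
      proof (rule ballI, rule ballI, rule impI)
        fix c c' assume cc: "c \<in> PB" "c' \<in> PB" "c \<noteq> c'"
        obtain i j where ij: "i < \<mu>*q" "j < \<mu>*q" "c = cl i" "c' = cl j" using cc(1,2) unfolding PB_def by auto
        hence "i \<noteq> j" using cc(3) by auto
        thus "\<forall>b\<in>c. \<forall>b'\<in>c'. card (b \<inter> b') = \<mu>" using ij blk_inter[OF h ij(1,2)] unfolding cl_def by auto
      qed
    qed
    show "\<exists>PX :: nat set set.
        partition_on X PX \<and> finite PX \<and> card PX = \<mu> * q \<and>
        (\<forall>P\<in>PX. card P = q) \<and>
        (\<forall>P\<in>PX. \<forall>P'\<in>PX. \<forall>x\<in>P. \<forall>y\<in>P'.
            (P \<noteq> P' \<longrightarrow> card {b\<in>?B. x \<in> b \<and> y \<in> b} = \<mu>) \<and>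
            (P = P' \<and> x \<noteq> y \<longrightarrow> card {b\<in>?B. x \<in> b \<and> y \<in> b} = 0))" by (rule PX_ok)
  qed
qed

end

definition netcode :: "nat \<Rightarrow> nat \<Rightarrow> nat set \<times> nat set set \<Rightarrow> nat list set \<Rightarrow> bool" where
  "netcode n q N C \<longleftrightarrow> (\<exists>h. bij_betw h (fst N) C \<and> snd N = blk h (fst N) ` ({0..<n}\<times>{0..<q}))"

locale net_loc =
  fixes \<mu> q :: nat and X :: "nat set" and B :: "nat set set" and PB :: "nat set set set" and PX :: "nat set set"
    and e :: "nat \<Rightarrow> nat set set" and lab :: "nat \<Rightarrow> nat \<Rightarrow> nat set"
  assumes mu: "0 < \<mu>" and q2: "2 \<le> q" and finX: "finite X" and cardX: "card X = \<mu>*q^2"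
    and blocks: "\<forall>b\<in>B. b \<subseteq> X \<and> card b = \<mu>*q"
    and partB: "partition_on B PB"
    and partc: "\<forall>c\<in>PB. partition_on X c"
    and partX: "partition_on X PX"
    and s3: "\<forall>P\<in>PX. \<forall>P'\<in>PX. \<forall>x\<in>P. \<forall>y\<in>P'.
            (P \<noteq> P' \<longrightarrow> card {b\<in>B. x \<in> b \<and> y \<in> b} = \<mu>) \<and>
            (P = P' \<and> x \<noteq> y \<longrightarrow> card {b\<in>B. x \<in> b \<and> y \<in> b} = 0)"
    and e: "bij_betw e {0..<\<mu>*q} PB"
    and lab: "\<forall>i<\<mu>*q. bij_betw (lab i) {0..<q} (e i)"
begin

definition psi :: "nat \<Rightarrow> nat list" where
  "psi x = map (\<lambda>i. THE a. a < q \<and> x \<in> lab i a) [0..<\<mu>*q]"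

lemma lab_bij: "i < \<mu>*q \<Longrightarrow> bij_betw (lab i) {0..<q} (e i)" using lab by blast
lemma lab_img: "i < \<mu>*q \<Longrightarrow> lab i ` {0..<q} = e i" using lab_bij unfolding bij_betw_def by blast
lemma lab_injon: "i < \<mu>*q \<Longrightarrow> inj_on (lab i) {0..<q}" using lab_bij unfolding bij_betw_def by blast

lemma eiPB: "i < \<mu>*q \<Longrightarrow> e i \<in> PB" using e unfolding bij_betw_def by auto
lemma lab_in: "i < \<mu>*q \<Longrightarrow> a < q \<Longrightarrow> lab i a \<in> e i"
proof -
  assume i: "i < \<mu>*q" and a: "a < q"
  have "lab i a \<in> lab i ` {0..<q}" using a by simp
  thus ?thesis unfolding lab_img[OF i] .
qed
lemma lab_B: "i < \<mu>*q \<Longrightarrow> a < q \<Longrightarrow> lab i a \<in> B"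
  using partition_onD1[OF partB] lab_in eiPB by blast
lemma lab_sub: "i < \<mu>*q \<Longrightarrow> a < q \<Longrightarrow> lab i a \<subseteq> X" using lab_B blocks by blast

lemma lab_inj:
  assumes "i < \<mu>*q" "j < \<mu>*q" "a < q" "b < q" "lab i a = lab j b"
  shows "i = j \<and> a = b"
proof -
  have "lab i a \<in> e i \<inter> e j" using lab_in[OF assms(1,3)] lab_in[OF assms(2,4)] assms(5) by auto
  hence "e i = e j" using partB eiPB assms(1,2) unfolding partition_on_def disjoint_def by blast
  hence ij: "i = j" using inj_onD[OF bij_betw_imp_inj_on[OF e]] assms(1,2) by simp
  moreover have "a = b" using inj_onD[OF lab_injon[OF assms(1)], of a b] assms ij by simp
  ultimately show ?thesis by simp
qed

lemma ex1_lab: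
  assumes x: "x \<in> X" and i: "i < \<mu>*q"
  shows "\<exists>!a. a < q \<and> x \<in> lab i a"
proof -
  have "partition_on X (e i)" using partc eiPB[OF i] by auto
  then obtain b where b: "b \<in> e i" "x \<in> b" using x unfolding partition_on_def by auto
  then obtain a where a: "a < q" "b = lab i a" using lab_img[OF i, symmetric] by auto
  show ?thesis
  proof (rule ex1I[of _ a])
    show "a < q \<and> x \<in> lab i a" using a b by simp
    fix a' assume a': "a' < q \<and> x \<in> lab i a'"
    show "a' = a"
    proof (rule ccontr)
      assume "a' \<noteq> a"
      hence "lab i a' \<noteq> lab i a" using lab_inj[OF i i] a a' by auto
      moreover have "lab i a' \<in> e i" "lab i a \<in> e i" using lab_in i a a' by auto
      ultimately have "lab i a' \<inter> lab i a = {}"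
        using partc eiPB[OF i] unfolding partition_on_def disjoint_def by blast
      thus False using a' a b by auto
    qed
  qed
qed

lemma psi_nth:
  assumes x: "x \<in> X" and i: "i < \<mu>*q"
  shows "psi x ! i < q" "x \<in> lab i (psi x ! i)"
proof -
  have "psi x ! i = (THE a. a < q \<and> x \<in> lab i a)" unfolding psi_def using i by simp
  hence "psi x ! i < q \<and> x \<in> lab i (psi x ! i)" using theI'[OF ex1_lab[OF x i]] by simp
  thus "psi x ! i < q" "x \<in> lab i (psi x ! i)" by auto
qed

lemma psi_len: "length (psi x) = \<mu>*q" unfolding psi_def by simp

lemma psi_iff:
  assumes x: "x \<in> X" and i: "i < \<mu>*q" and a: "a < q"
  shows "x \<in> lab i a \<longleftrightarrow> psi x ! i = a"
  using ex1_lab[OF x i] psi_nth[OF x i] a by blast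

lemma blk_lab:
  assumes i: "i < \<mu>*q" and a: "a < q"
  shows "blk psi X (i,a) = lab i a"
  unfolding blk_simp using psi_iff[OF _ i a] lab_sub[OF i a] by auto

lemma B_eq: "B = blk psi X ` ({0..<\<mu>*q}\<times>{0..<q})"
proof
  show "B \<subseteq> blk psi X ` ({0..<\<mu>*q}\<times>{0..<q})"
  proof
    fix b assume "b \<in> B"
    then obtain c where c: "c \<in> PB" "b \<in> c" using partB unfolding partition_on_def by auto
    then obtain i where i: "i < \<mu>*q" "c = e i" using e unfolding bij_betw_def by auto
    then obtain a where a: "a < q" "b = lab i a" using lab_img[OF i(1), symmetric] c by auto
    thus "b \<in> blk psi X ` ({0..<\<mu>*q}\<times>{0..<q})" using blk_lab[OF i(1) a(1)] i a by force
  qed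
  show "blk psi X ` ({0..<\<mu>*q}\<times>{0..<q}) \<subseteq> B" using blk_lab lab_B by auto
qed

lemma agree_card:
  assumes x: "x \<in> X" and y: "y \<in> X"
  shows "card {i\<in>{0..<\<mu>*q}. psi x ! i = psi y ! i} = card {b\<in>B. x \<in> b \<and> y \<in> b}"
proof -
  let ?K = "{i\<in>{0..<\<mu>*q}. psi x ! i = psi y ! i}"
  have eq: "(\<lambda>i. lab i (psi x ! i)) ` ?K = {b\<in>B. x \<in> b \<and> y \<in> b}"
  proof
    show "(\<lambda>i. lab i (psi x ! i)) ` ?K \<subseteq> {b\<in>B. x \<in> b \<and> y \<in> b}"
    proof
      fix b assume "b \<in> (\<lambda>i. lab i (psi x ! i)) ` ?K"
      then obtain i where i: "i < \<mu>*q" "psi x ! i = psi y ! i" "b = lab i (psi x ! i)" by auto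
      thus "b \<in> {b\<in>B. x \<in> b \<and> y \<in> b}" using lab_B[OF i(1) psi_nth(1)[OF x i(1)]] psi_nth(2)[OF x i(1)] psi_nth(2)[OF y i(1)] i(2,3) by simp
    qed
    show "{b\<in>B. x \<in> b \<and> y \<in> b} \<subseteq> (\<lambda>i. lab i (psi x ! i)) ` ?K"
    proof
      fix b assume b: "b \<in> {b\<in>B. x \<in> b \<and> y \<in> b}"
      have "b \<in> blk psi X ` ({0..<\<mu>*q}\<times>{0..<q})" using b B_eq by blast
      then obtain i a where ia0: "i < \<mu>*q" "a < q" "b = blk psi X (i,a)" by auto
      hence ia: "i < \<mu>*q" "a < q" "b = lab i a" using blk_lab by auto
      have "psi x ! i = a" "psi y ! i = a" using psi_iff[OF x ia(1,2)] psi_iff[OF y ia(1,2)] b ia by auto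
      thus "b \<in> (\<lambda>i. lab i (psi x ! i)) ` ?K" using ia by (intro image_eqI[where x=i]) auto
    qed
  qed
  have inj: "inj_on (\<lambda>i. lab i (psi x ! i)) ?K"
  proof (rule inj_onI)
    fix i j assume "i \<in> ?K" "j \<in> ?K" "lab i (psi x ! i) = lab j (psi x ! j)"
    thus "i = j" using lab_inj[OF _ _ psi_nth(1)[OF x] psi_nth(1)[OF x], of i j] by auto
  qed
  show ?thesis using card_image[OF inj] eq by simp
qed

lemma agree_le:
  assumes x: "x \<in> X" and y: "y \<in> X" and xy: "x \<noteq> y"
  shows "card {i\<in>{0..<\<mu>*q}. psi x ! i = psi y ! i} \<le> \<mu>"
proof -
  obtain P P' where PP: "P \<in> PX" "P' \<in> PX" "x \<in> P" "y \<in> P'" using partX x y unfolding partition_on_def by auto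
  note S = s3[rule_format, OF PP]
  have "card {b\<in>B. x \<in> b \<and> y \<in> b} = \<mu> \<or> card {b\<in>B. x \<in> b \<and> y \<in> b} = 0"
    using S xy by (cases "P = P'") auto
  thus ?thesis unfolding agree_card[OF x y] by auto
qed

lemma psi_inj: "inj_on psi X"
proof (rule inj_onI)
  fix x y assume xy: "x \<in> X" "y \<in> X" "psi x = psi y"
  show "x = y"
  proof (rule ccontr)
    assume "x \<noteq> y"
    hence c1: "card {i\<in>{0..<\<mu>*q}. psi x ! i = psi y ! i} \<le> \<mu>" using agree_le[OF xy(1,2)] by blast
    have c2: "{i\<in>{0..<\<mu>*q}. psi x ! i = psi y ! i} = {0..<\<mu>*q}" using xy by auto
    have "card {0..<\<mu>*q} \<le> \<mu>" using c1 unfolding c2 .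
    hence "\<mu>*q \<le> \<mu>" by simp
    moreover have "\<mu>*2 \<le> \<mu>*q" using q2 by simp
    ultimately show False using mu by linarith
  qed
qed

lemma psi_code: "psi ` X \<in> codes q (\<mu>*q) (\<mu>*q^2) (\<mu>*q-\<mu>)"
  unfolding codes_def
proof (intro CollectI conjI ballI impI)
  show "psi ` X \<subseteq> words q (\<mu>*q)" unfolding words_def using psi_nth(1) psi_len by auto
  show "card (psi ` X) = \<mu>*q^2" using card_image[OF psi_inj] cardX by simp
  fix u v assume uv: "u \<in> psi ` X" "v \<in> psi ` X" "u \<noteq> v"
  then obtain x y where xy: "x \<in> X" "y \<in> X" "u = psi x" "v = psi y" by auto
  hence "x \<noteq> y" using uv by auto
  hence le: "card {i\<in>{0..<\<mu>*q}. u ! i = v ! i} \<le> \<mu>" using agree_le xy by auto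
  have "card {0..<\<mu>*q} = card ({i\<in>{0..<\<mu>*q}. u!i = v!i} \<union> {i\<in>{0..<\<mu>*q}. u!i \<noteq> v!i})"
    by (intro arg_cong[where f=card]) auto
  also have "\<dots> = card {i\<in>{0..<\<mu>*q}. u!i = v!i} + card {i\<in>{0..<\<mu>*q}. u!i \<noteq> v!i}"
    by (rule card_Un_disjoint) auto
  finally have "\<mu>*q = card {i\<in>{0..<\<mu>*q}. u!i = v!i} + card {i\<in>{0..<\<mu>*q}. u!i \<noteq> v!i}" by simp
  moreover have "hamming u v = card {i\<in>{0..<\<mu>*q}. u!i \<noteq> v!i}"
    unfolding hamming_def xy psi_len by (intro arg_cong[where f=card]) auto
  ultimately show "\<mu>*q-\<mu> \<le> hamming u v" using le by linarith
qed

lemma netcode: "netcode (\<mu>*q) q (X,B) (psi ` X)"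
  unfolding netcode_def using psi_inj B_eq by (auto simp: bij_betw_def)

end

lemma bij_img_filter:
  assumes "bij_betw \<phi> X X'" "\<forall>x\<in>X. P x \<longleftrightarrow> Q (\<phi> x)"
  shows "\<phi> ` {x\<in>X. P x} = {y\<in>X'. Q y}"
proof
  show "\<phi> ` {x\<in>X. P x} \<subseteq> {y\<in>X'. Q y}" using assms unfolding bij_betw_def by auto
  show "{y\<in>X'. Q y} \<subseteq> \<phi> ` {x\<in>X. P x}"
  proof
    fix y assume y: "y \<in> {y\<in>X'. Q y}"
    then obtain x where "x \<in> X" "y = \<phi> x" using assms(1) unfolding bij_betw_def by auto
    thus "y \<in> \<phi> ` {x\<in>X. P x}" using y assms(2) by auto
  qed
qed

lemma ctr_inj:
  assumes "\<sigma> permutes {0..<n}" "\<forall>i<n. \<pi> i permutes {0..<q}" "\<forall>w\<in>C. length w = n"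
  shows "inj_on (ctr n \<sigma> \<pi>) C"
proof (rule inj_onI)
  fix u v assume uv: "u \<in> C" "v \<in> C" "ctr n \<sigma> \<pi> u = ctr n \<sigma> \<pi> v"
  show "u = v"
  proof (rule nth_equalityI)
    show "length u = length v" using assms(3) uv by simp
    fix j assume "j < length u"
    hence j: "j < n" using assms(3) uv by simp
    define i where "i = inv \<sigma> j"
    have i: "i < n" unfolding i_def using permutes_in_image[OF permutes_inv[OF assms(1)]] j by simp
    have si: "\<sigma> i = j" unfolding i_def using permutes_inverses(1)[OF assms(1)] by simp
    have "ctr n \<sigma> \<pi> u ! i = ctr n \<sigma> \<pi> v ! i" using uv by simp
    hence "\<pi> i (u ! j) = \<pi> i (v ! j)" using i si by (simp add: ctr_nth)
    moreover have "inj (\<pi> i)" using assms(2) i permutes_inj by blast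
    ultimately show "u ! j = v ! j" by (simp add: inj_eq)
  qed
qed

lemma equiv_imp_iso:
  assumes h: "bij_betw h X C" and B: "B = blk h X ` ({0..<n}\<times>{0..<q})"
    and h': "bij_betw h' X' C'" and B': "B' = blk h' X' ` ({0..<n}\<times>{0..<q})"
    and len: "\<forall>w\<in>C. length w = n"
    and eqv: "(C,C') \<in> code_equiv q n"
  shows "((X,B),(X',B')) \<in> net_iso"
proof -
  obtain \<sigma> \<pi> where sp: "\<sigma> permutes {0..<n}" "\<forall>i<n. \<pi> i permutes {0..<q}" "C' = ctr n \<sigma> \<pi> ` C"
    using eqv unfolding code_equiv_iff by blast
  define T where "T = ctr n \<sigma> \<pi>"
  have T: "bij_betw T C C'" unfolding T_def bij_betw_def using ctr_inj[OF sp(1,2) len] sp(3) by simp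
  define \<phi> where "\<phi> = inv_into X' h' \<circ> T \<circ> h"
  have hinv: "bij_betw (inv_into X' h') C' X'" using h' by (rule bij_betw_inv_into)
  have phi: "bij_betw \<phi> X X'" unfolding \<phi>_def using bij_betw_trans[OF bij_betw_trans[OF h T] hinv] by (simp add: comp_assoc)
  have hphi: "h' (\<phi> x) = T (h x)" if x: "x \<in> X" for x
  proof -
    have "T (h x) \<in> C'" using T h x unfolding bij_betw_def by auto
    hence "T (h x) \<in> h' ` X'" using h' unfolding bij_betw_def by simp
    thus ?thesis unfolding \<phi>_def by (simp add: f_inv_into_f)
  qed
  have sinv: "\<sigma> (inv \<sigma> j) = j" for j using permutes_inverses(1)[OF sp(1)] .
  have invn: "inv \<sigma> j < n" if "j < n" for j using permutes_in_image[OF permutes_inv[OF sp(1)]] that by simp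
  have img: "\<phi> ` blk h X (j,a) = blk h' X' (inv \<sigma> j, \<pi> (inv \<sigma> j) a)" if j: "j < n" for j a
    unfolding blk_simp
  proof (rule bij_img_filter[OF phi], intro ballI)
    fix x assume x: "x \<in> X"
    let ?i = "inv \<sigma> j"
    have "h' (\<phi> x) ! ?i = \<pi> ?i (h x ! j)" unfolding hphi[OF x] T_def using invn[OF j] sinv[of j] by (simp add: ctr_nth)
    moreover have "inj (\<pi> ?i)" using sp(2) invn[OF j] permutes_inj by blast
    ultimately show "h x ! j = a \<longleftrightarrow> h' (\<phi> x) ! ?i = \<pi> ?i a" by (simp add: inj_eq)
  qed
  define g where "g = (\<lambda>(j,a). (inv \<sigma> j, \<pi> (inv \<sigma> j) a))"
  have gI: "g ` ({0..<n}\<times>{0..<q}) = {0..<n}\<times>{0..<q}"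
  proof
    show "g ` ({0..<n}\<times>{0..<q}) \<subseteq> {0..<n}\<times>{0..<q}"
    proof
      fix p assume "p \<in> g ` ({0..<n}\<times>{0..<q})"
      then obtain j a where ja: "j < n" "a < q" "p = g (j,a)" by auto
      have "\<pi> (inv \<sigma> j) a < q" using permutes_in_image[OF sp(2)[rule_format, OF invn[OF ja(1)]]] ja(2) by simp
      thus "p \<in> {0..<n}\<times>{0..<q}" using ja invn unfolding g_def by simp
    qed
    show "{0..<n}\<times>{0..<q} \<subseteq> g ` ({0..<n}\<times>{0..<q})"
    proof
      fix p assume "p \<in> {0..<n}\<times>{0..<q}"
      then obtain i b where ib: "i < n" "b < q" "p = (i,b)" by auto
      define j where "j = \<sigma> i"
      define a where "a = inv (\<pi> i) b"
      have j: "j < n" unfolding j_def using permutes_in_image[OF sp(1)] ib by simp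
      have ij: "inv \<sigma> j = i" unfolding j_def using permutes_inverses(2)[OF sp(1)] .
      have a: "a < q" unfolding a_def using permutes_in_image[OF permutes_inv[OF sp(2)[rule_format, OF ib(1)]]] ib by simp
      have "\<pi> i a = b" unfolding a_def using permutes_inverses(1)[OF sp(2)[rule_format, OF ib(1)]] .
      hence "g (j,a) = p" unfolding g_def using ij ib by simp
      thus "p \<in> g ` ({0..<n}\<times>{0..<q})" using j a by force
    qed
  qed
  have "(\<lambda>b. \<phi> ` b) ` B = (\<lambda>p. blk h' X' (g p)) ` ({0..<n}\<times>{0..<q})"
    unfolding B image_image
  proof (rule image_cong[OF refl])
    fix p assume "p \<in> {0..<n}\<times>{0..<q}"
    then obtain j a where "j < n" "p = (j,a)" by auto
    thus "\<phi> ` blk h X p = blk h' X' (g p)" using img[of j a] unfolding g_def by simp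
  qed
  also have "\<dots> = blk h' X' ` (g ` ({0..<n}\<times>{0..<q}))" by (simp add: image_image)
  also have "\<dots> = B'" unfolding gI B' ..
  finally show ?thesis unfolding net_iso_def using phi by auto
qed

lemma iso_imp_equiv:
  assumes LC: "code_loc \<mu> q C" and LC': "code_loc \<mu> q C'"
    and h: "bij_betw h X C" and B: "B = blk h X ` ({0..<\<mu>*q}\<times>{0..<q})"
    and h': "bij_betw h' X' C'" and B': "B' = blk h' X' ` ({0..<\<mu>*q}\<times>{0..<q})"
    and iso: "((X,B),(X',B')) \<in> net_iso"
  shows "(C,C') \<in> code_equiv q (\<mu>*q)"
proof -
  let ?n = "\<mu>*q"
  let ?I = "{0..<\<mu>*q}\<times>{0..<q}"
  have mu: "0 < \<mu>" and q2: "2 \<le> q" using LC unfolding code_loc_def by auto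
  obtain \<phi> where phi: "bij_betw \<phi> X X'" "(\<lambda>b. \<phi> ` b) ` B = B'" using iso unfolding net_iso_def by auto
  have injphi: "inj_on \<phi> X" using phi(1) by (rule bij_betw_imp_inj_on)
  have bsub: "blk h X p \<subseteq> X" for p by (cases p) (auto simp: blk_simp)
  have bsub': "blk h' X' p \<subseteq> X'" for p by (cases p) (auto simp: blk_simp)
  have binj: "p = p'" if "p \<in> ?I" "p' \<in> ?I" "blk h X p = blk h X p'" for p p'
  proof -
    obtain j a j' a' where pp: "p = (j,a)" "p' = (j',a')" by (cases p, cases p')
    show ?thesis using code_loc.blk_inj[OF LC h, of j a j' a'] that unfolding pp by simp
  qed
  have binj': "p = p'" if "p \<in> ?I" "p' \<in> ?I" "blk h' X' p = blk h' X' p'" for p p'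
  proof -
    obtain j a j' a' where pp: "p = (j,a)" "p' = (j',a')" by (cases p, cases p')
    show ?thesis using code_loc.blk_inj[OF LC' h', of j a j' a'] that unfolding pp by simp
  qed
  have bdisj: "blk h X (j,a) \<inter> blk h X (j,a') = {}" if "a \<noteq> a'" for j a a'
    using that by (auto simp: blk_simp)
  have bdisj': "blk h' X' (j,a) \<inter> blk h' X' (j,a') = {}" if "a \<noteq> a'" for j a a'
    using that by (auto simp: blk_simp)
  have bmeet: "blk h X (j,a) \<inter> blk h X (j',a') \<noteq> {}" if "j < ?n" "j' < ?n" "j \<noteq> j'" "a < q" "a' < q" for j j' a a'
  proof
    assume "blk h X (j,a) \<inter> blk h X (j',a') = {}"
    thus False using code_loc.blk_inter[OF LC h that] mu by simp
  qed
  have bmeet': "blk h' X' (j,a) \<inter> blk h' X' (j',a') \<noteq> {}" if "j < ?n" "j' < ?n" "j \<noteq> j'" "a < q" "a' < q" for j j' a a'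
  proof
    assume "blk h' X' (j,a) \<inter> blk h' X' (j',a') = {}"
    thus False using code_loc.blk_inter[OF LC' h' that] mu by simp
  qed
  have ex: "\<exists>p'. p' \<in> ?I \<and> \<phi> ` blk h X p = blk h' X' p'" if "p \<in> ?I" for p
  proof -
    have "\<phi> ` blk h X p \<in> B'" using phi(2) B that by blast
    thus ?thesis unfolding B' by blast
  qed
  define G where "G p = (SOME p'. p' \<in> ?I \<and> \<phi> ` blk h X p = blk h' X' p')" for p
  have G: "G p \<in> ?I \<and> \<phi> ` blk h X p = blk h' X' (G p)" if "p \<in> ?I" for p
    unfolding G_def using someI_ex[OF ex[OF that]] .
  have phi_Int: "\<phi> ` (blk h X p \<inter> blk h X p') = \<phi> ` blk h X p \<inter> \<phi> ` blk h X p'" for p p'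
    using inj_on_image_Int[OF injphi bsub bsub] .
  define \<kappa> where "\<kappa> j = fst (G (j,0))" for j
  have Gfst: "fst (G (j,a)) = \<kappa> j" if j: "j < ?n" and a: "a < q" for j a
  proof (rule ccontr)
    assume ne: "fst (G (j,a)) \<noteq> \<kappa> j"
    have a0: "a \<noteq> 0"
    proof
      assume "a = 0" thus False using ne unfolding \<kappa>_def by simp
    qed
    have G1: "G (j,a) \<in> ?I" "\<phi> ` blk h X (j,a) = blk h' X' (G (j,a))" using G[of "(j,a)"] j a by auto
    have G2: "G (j,0) \<in> ?I" "\<phi> ` blk h X (j,0) = blk h' X' (G (j,0))" using G[of "(j,0)"] j q2 by auto
    have "blk h' X' (G (j,a)) \<inter> blk h' X' (G (j,0)) \<noteq> {}"
      using bmeet'[of "fst (G (j,a))" "fst (G (j,0))" "snd (G (j,a))" "snd (G (j,0))"] G1(1) G2(1) ne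
      unfolding \<kappa>_def by auto
    moreover have "blk h' X' (G (j,a)) \<inter> blk h' X' (G (j,0)) = {}"
      using G1(2) G2(2) phi_Int[of "(j,a)" "(j,0)"] bdisj[OF a0, of j] by simp
    ultimately show False by simp
  qed
  have kap_n: "\<kappa> j < ?n" if "j < ?n" for j using G[of "(j,0)"] that q2 unfolding \<kappa>_def by auto
  have kap_inj: "inj_on \<kappa> {0..<?n}"
  proof (rule inj_onI)
    fix j j' assume jj: "j \<in> {0..<?n}" "j' \<in> {0..<?n}" "\<kappa> j = \<kappa> j'"
    show "j = j'"
    proof (rule ccontr)
      assume ne: "j \<noteq> j'"
      have G1: "G (j,0) \<in> ?I" "\<phi> ` blk h X (j,0) = blk h' X' (G (j,0))" using G[of "(j,0)"] jj q2 by auto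
      have G2: "G (j',0) \<in> ?I" "\<phi> ` blk h X (j',0) = blk h' X' (G (j',0))" using G[of "(j',0)"] jj q2 by auto
      have "blk h' X' (G (j,0)) \<inter> blk h' X' (G (j',0)) \<noteq> {}"
        using bmeet[of j j' 0 0] jj ne q2 phi_Int[of "(j,0)" "(j',0)"] G1(2) G2(2) by auto
      hence "snd (G (j,0)) = snd (G (j',0))"
        using bdisj'[of "snd (G (j,0))" "snd (G (j',0))" "\<kappa> j"] jj(3) unfolding \<kappa>_def
        by (metis prod.collapse)
      hence "G (j,0) = G (j',0)" using jj(3) unfolding \<kappa>_def by (simp add: prod_eq_iff)
      hence "\<phi> ` blk h X (j,0) = \<phi> ` blk h X (j',0)" using G1(2) G2(2) by simp
      hence "blk h X (j,0) = blk h X (j',0)" using inj_on_image_eq_iff[OF injphi bsub bsub] by blast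
      hence "(j,0) = (j',0)" using binj[of "(j,0)" "(j',0)"] jj q2 by simp
      thus False using ne by simp
    qed
  qed
  define \<kappa>' where "\<kappa>' j = (if j < ?n then \<kappa> j else j)" for j
  have "inj_on \<kappa>' {0..<?n} = inj_on \<kappa> {0..<?n}" by (rule inj_on_cong) (simp add: \<kappa>'_def)
  hence k'inj: "inj_on \<kappa>' {0..<?n}" using kap_inj by simp
  have k'sub: "\<kappa>' ` {0..<?n} \<subseteq> {0..<?n}" using kap_n by (auto simp: \<kappa>'_def)
  have k'img: "\<kappa>' ` {0..<?n} = {0..<?n}" using endo_inj_surj[OF finite_atLeastLessThan k'sub k'inj] .
  have k'bij: "bij_betw \<kappa>' {0..<?n} {0..<?n}" unfolding bij_betw_def using k'inj k'img by simp
  have k'perm: "\<kappa>' permutes {0..<?n}"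
    by (rule bij_imp_permutes[OF k'bij]) (simp add: \<kappa>'_def)
  define \<sigma> where "\<sigma> = inv \<kappa>'"
  have sperm: "\<sigma> permutes {0..<?n}" unfolding \<sigma>_def by (rule permutes_inv[OF k'perm])
  have s_n: "\<sigma> i < ?n" if "i < ?n" for i using permutes_in_image[OF sperm] that by simp
  have ks: "\<kappa> (\<sigma> i) = i" if "i < ?n" for i
    using permutes_inverses(1)[OF k'perm, of i] s_n[OF that] unfolding \<sigma>_def \<kappa>'_def by simp
  define \<pi> where "\<pi> i a = (if a < q then snd (G (\<sigma> i, a)) else a)" for i a
  have pperm: "\<pi> i permutes {0..<q}" if i: "i < ?n" for i
  proof -
    have into: "\<pi> i a < q" if "a < q" for a using G[of "(\<sigma> i, a)"] s_n[OF i] that unfolding \<pi>_def by auto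
    have inj: "inj_on (\<pi> i) {0..<q}"
    proof (rule inj_onI)
      fix a a' assume aa: "a \<in> {0..<q}" "a' \<in> {0..<q}" "\<pi> i a = \<pi> i a'"
      have "fst (G (\<sigma> i, a)) = fst (G (\<sigma> i, a'))" using Gfst s_n[OF i] aa by simp
      hence "G (\<sigma> i, a) = G (\<sigma> i, a')" using aa unfolding \<pi>_def by (simp add: prod_eq_iff)
      hence "\<phi> ` blk h X (\<sigma> i, a) = \<phi> ` blk h X (\<sigma> i, a')" using G[of "(\<sigma> i, a)"] G[of "(\<sigma> i, a')"] s_n[OF i] aa by auto
      hence "blk h X (\<sigma> i, a) = blk h X (\<sigma> i, a')" using inj_on_image_eq_iff[OF injphi bsub bsub] by blast
      thus "a = a'" using binj s_n[OF i] aa by auto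
    qed
    have psub: "\<pi> i ` {0..<q} \<subseteq> {0..<q}" using into by auto
    have "\<pi> i ` {0..<q} = {0..<q}" using endo_inj_surj[OF finite_atLeastLessThan psub inj] .
    hence pbij: "bij_betw (\<pi> i) {0..<q} {0..<q}" unfolding bij_betw_def using inj by simp
    show ?thesis by (rule bij_imp_permutes[OF pbij]) (simp add: \<pi>_def)
  qed
  define T where "T = ctr ?n \<sigma> \<pi>"
  have hT: "h' (\<phi> x) = T (h x)" if x: "x \<in> X" for x
  proof (rule nth_equalityI)
    have hx: "h x \<in> C" using h x unfolding bij_betw_def by auto
    have hpx: "h' (\<phi> x) \<in> C'" using h' phi(1) x unfolding bij_betw_def by auto
    show "length (h' (\<phi> x)) = length (T (h x))" unfolding T_def using code_loc.lenC[OF LC' hpx] by (simp add: ctr_nth)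
    fix i assume "i < length (h' (\<phi> x))"
    hence i: "i < ?n" using code_loc.lenC[OF LC' hpx] by simp
    define j where "j = \<sigma> i"
    define a where "a = h x ! j"
    have j: "j < ?n" unfolding j_def using s_n[OF i] .
    have a: "a < q" unfolding a_def using code_loc.valC[OF LC hx j] .
    have "x \<in> blk h X (j,a)" using x unfolding a_def blk_simp by simp
    hence "\<phi> x \<in> blk h' X' (G (j,a))" using G[of "(j,a)"] j a by auto
    moreover have "G (j,a) = (i, \<pi> i a)" using Gfst[OF j a] ks[OF i] a unfolding \<pi>_def j_def by (simp add: prod_eq_iff)
    ultimately have "h' (\<phi> x) ! i = \<pi> i a" by (simp add: blk_simp)
    thus "h' (\<phi> x) ! i = T (h x) ! i" unfolding T_def a_def j_def using i by (simp add: ctr_nth)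
  qed
  have "C' = h' ` X'" using h' unfolding bij_betw_def by simp
  also have "\<dots> = h' ` \<phi> ` X" using phi(1) unfolding bij_betw_def by simp
  also have "\<dots> = T ` h ` X" using hT by (simp add: image_image)
  also have "\<dots> = T ` C" using h unfolding bij_betw_def by simp
  finally show ?thesis unfolding code_equiv_iff T_def using sperm pperm by blast
qed

lemma net_to_code:
  assumes mu: "0 < \<mu>" and q2: "2 \<le> q" and net: "symmetric_net \<mu> q X B"
  shows "\<exists>C. C \<in> codes q (\<mu>*q) (\<mu>*q^2) (\<mu>*q-\<mu>) \<and> netcode (\<mu>*q) q (X,B) C"
proof -
  have finX: "finite X" using net unfolding symmetric_net_def by (elim conjE) assumption
  have cardX: "card X = \<mu>*q^2" using net unfolding symmetric_net_def by (elim conjE) assumption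
  have blocks: "\<forall>b\<in>B. b \<subseteq> X \<and> card b = \<mu>*q" using net unfolding symmetric_net_def by (elim conjE) assumption
  have ePB: "\<exists>PB :: nat set set set.
        partition_on B PB \<and> finite PB \<and> card PB = \<mu> * q \<and>
        (\<forall>c\<in>PB. partition_on X c) \<and>
        (\<forall>c\<in>PB. \<forall>c'\<in>PB. c \<noteq> c' \<longrightarrow>
            (\<forall>b\<in>c. \<forall>b'\<in>c'. card (b \<inter> b') = \<mu>))"
    using net unfolding symmetric_net_def by (elim conjE) assumption
  have ePX: "\<exists>PX :: nat set set.
        partition_on X PX \<and> finite PX \<and> card PX = \<mu> * q \<and>
        (\<forall>P\<in>PX. card P = q) \<and>
        (\<forall>P\<in>PX. \<forall>P'\<in>PX. \<forall>x\<in>P. \<forall>y\<in>P'.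
            (P \<noteq> P' \<longrightarrow> card {b\<in>B. x \<in> b \<and> y \<in> b} = \<mu>) \<and>
            (P = P' \<and> x \<noteq> y \<longrightarrow> card {b\<in>B. x \<in> b \<and> y \<in> b} = 0))"
    using net unfolding symmetric_net_def by (elim conjE) assumption
  obtain PB where partB: "partition_on B PB" and finPB: "finite PB" and cardPB: "card PB = \<mu>*q"
    and partc: "\<forall>c\<in>PB. partition_on X c"
    using ePB by (elim exE conjE) (rule that; assumption)
  obtain PX where partX: "partition_on X PX"
    and s3: "\<forall>P\<in>PX. \<forall>P'\<in>PX. \<forall>x\<in>P. \<forall>y\<in>P'.
            (P \<noteq> P' \<longrightarrow> card {b\<in>B. x \<in> b \<and> y \<in> b} = \<mu>) \<and>
            (P = P' \<and> x \<noteq> y \<longrightarrow> card {b\<in>B. x \<in> b \<and> y \<in> b} = 0)"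
    using ePX by (elim exE conjE) (rule that; assumption)
  obtain e where e: "bij_betw e {0..<card PB} PB" using ex_bij_betw_nat_finite[OF finPB] by blast
  have cardc: "card c = q" "finite c" if c: "c \<in> PB" for c
  proof -
    have pc: "partition_on X c" using partc c by blast
    have sub: "\<forall>b\<in>c. card b = \<mu>*q" using blocks partB c unfolding partition_on_def by blast
    have "card X = card c * (\<mu>*q)" by (rule part_card[OF pc finX sub])
    hence "\<mu>*q*q = card c * (\<mu>*q)" using cardX by (simp add: power2_eq_square)
    thus "card c = q" using mu q2 by simp
    thus "finite c" using q2 card.infinite by fastforce
  qed
  define lab where "lab i = (SOME f. bij_betw f {0..<q} (e i))" for i
  have lab: "\<forall>i<\<mu>*q. bij_betw (lab i) {0..<q} (e i)"
  proof (intro allI impI)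
    fix i assume i: "i < \<mu>*q"
    have ei: "e i \<in> PB" using e i cardPB unfolding bij_betw_def by auto
    obtain f where "bij_betw f {0..<card (e i)} (e i)" using ex_bij_betw_nat_finite[OF cardc(2)[OF ei]] by blast
    hence "\<exists>f. bij_betw f {0..<q} (e i)" using cardc(1)[OF ei] by auto
    thus "bij_betw (lab i) {0..<q} (e i)" unfolding lab_def by (rule someI_ex)
  qed
  interpret net_loc \<mu> q X B PB PX e lab
    using mu q2 finX cardX blocks partB partc partX s3 e lab cardPB by unfold_locales auto
  show ?thesis using psi_code netcode by blast
qed

lemma code_to_net:
  assumes mu: "0 < \<mu>" and q2: "2 \<le> q" and C: "C \<in> codes q (\<mu>*q) (\<mu>*q^2) (\<mu>*q-\<mu>)"
  shows "\<exists>N. N \<in> symmetric_nets \<mu> q \<and> netcode (\<mu>*q) q N C"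
proof -
  interpret code_loc \<mu> q C using mu q2 C by unfold_locales
  obtain h where h: "bij_betw h {0..<card C} C" using ex_bij_betw_nat_finite[OF finC] by blast
  let ?N = "({0..<card C}, blk h {0..<card C} ` ({0..<\<mu>*q}\<times>{0..<q}))"
  have "?N \<in> symmetric_nets \<mu> q" unfolding symmetric_nets_def using code_net[OF h] by simp
  moreover have "netcode (\<mu>*q) q ?N C" unfolding netcode_def using h by auto
  ultimately show ?thesis by blast
qed

lemma compat:
  assumes mu: "0 < \<mu>" and q2: "2 \<le> q"
    and C: "C \<in> codes q (\<mu>*q) (\<mu>*q^2) (\<mu>*q-\<mu>)" and C': "C' \<in> codes q (\<mu>*q) (\<mu>*q^2) (\<mu>*q-\<mu>)"
    and R: "netcode (\<mu>*q) q N C" and R': "netcode (\<mu>*q) q N' C'"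
  shows "(N,N') \<in> net_iso \<longleftrightarrow> (C,C') \<in> code_equiv q (\<mu>*q)"
proof -
  have LC: "code_loc \<mu> q C" using mu q2 C by unfold_locales
  have LC': "code_loc \<mu> q C'" using mu q2 C' by unfold_locales
  obtain X B where N: "N = (X,B)" by (cases N)
  obtain X' B' where N': "N' = (X',B')" by (cases N')
  obtain h where h: "bij_betw h X C" "B = blk h X ` ({0..<\<mu>*q}\<times>{0..<q})" using R unfolding netcode_def N by auto
  obtain h' where h': "bij_betw h' X' C'" "B' = blk h' X' ` ({0..<\<mu>*q}\<times>{0..<q})" using R' unfolding netcode_def N' by auto
  show ?thesis
  proof
    assume "(N,N') \<in> net_iso"
    thus "(C,C') \<in> code_equiv q (\<mu>*q)" using iso_imp_equiv[OF LC LC' h h'] unfolding N N' by blast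
  next
    assume "(C,C') \<in> code_equiv q (\<mu>*q)"
    moreover have "\<forall>w\<in>C. length w = \<mu>*q" using code_loc.lenC[OF LC] by blast
    ultimately show "(N,N') \<in> net_iso" using equiv_imp_iso[OF h h'] unfolding N N' by blast
  qed
qed

theorem theorem5p13:
  fixes \<mu> q :: nat
  assumes "0 < \<mu>" and "2 \<le> q"
  shows "\<exists>f. bij_betw f (symmetric_nets \<mu> q // net_iso)
                        (codes q (\<mu> * q) (\<mu> * q^2) (\<mu> * q - \<mu>) // code_equiv q (\<mu> * q))"
proof (rule quot_bij[where R = "netcode (\<mu>*q) q"])
  show "\<forall>x\<in>symmetric_nets \<mu> q. (x,x) \<in> net_iso" using net_iso_refl by (auto simp: symmetric_nets_def)
  show "\<forall>x\<in>symmetric_nets \<mu> q. \<forall>z. (x,z) \<in> net_iso \<longrightarrow> (z,x) \<in> net_iso"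
  proof (intro ballI allI impI)
    fix x z assume x: "x \<in> symmetric_nets \<mu> q" and xz: "(x,z) \<in> net_iso"
    obtain X B where xe: "x = (X,B)" by (cases x)
    obtain X' B' where ze: "z = (X',B')" by (cases z)
    have "\<forall>b\<in>B. b \<subseteq> X" using x unfolding xe symmetric_nets_def symmetric_net_def by auto
    thus "(z,x) \<in> net_iso" using net_iso_sym xz unfolding xe ze by blast
  qed
  show "trans net_iso" by (rule net_iso_trans)
  show "\<forall>x\<in>codes q (\<mu> * q) (\<mu> * q^2) (\<mu> * q - \<mu>). (x,x) \<in> code_equiv q (\<mu>*q)"
    using code_equiv_refl unfolding codes_def words_def by auto
  show "\<forall>x\<in>codes q (\<mu> * q) (\<mu> * q^2) (\<mu> * q - \<mu>). \<forall>z. (x,z) \<in> code_equiv q (\<mu>*q) \<longrightarrow> (z,x) \<in> code_equiv q (\<mu>*q)"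
  proof (intro ballI allI impI)
    fix x z assume x: "x \<in> codes q (\<mu> * q) (\<mu> * q^2) (\<mu> * q - \<mu>)" and xz: "(x,z) \<in> code_equiv q (\<mu>*q)"
    have "\<forall>w\<in>x. length w = \<mu>*q" using x unfolding codes_def words_def by auto
    thus "(z,x) \<in> code_equiv q (\<mu>*q)" using code_equiv_sym xz by blast
  qed
  show "trans (code_equiv q (\<mu>*q))" by (rule code_equiv_trans)
  show "\<forall>x\<in>symmetric_nets \<mu> q. \<exists>y\<in>codes q (\<mu> * q) (\<mu> * q^2) (\<mu> * q - \<mu>). netcode (\<mu>*q) q x y"
  proof
    fix x assume x: "x \<in> symmetric_nets \<mu> q"
    obtain X B where xe: "x = (X,B)" by (cases x)
    show "\<exists>y\<in>codes q (\<mu> * q) (\<mu> * q^2) (\<mu> * q - \<mu>). netcode (\<mu>*q) q x y"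
      using net_to_code[OF assms, of X B] x unfolding xe symmetric_nets_def by auto
  qed
  show "\<forall>y\<in>codes q (\<mu> * q) (\<mu> * q^2) (\<mu> * q - \<mu>). \<exists>x\<in>symmetric_nets \<mu> q. netcode (\<mu>*q) q x y"
    using code_to_net[OF assms] by blast
  show "\<forall>x\<in>symmetric_nets \<mu> q. \<forall>x'\<in>symmetric_nets \<mu> q. \<forall>y\<in>codes q (\<mu> * q) (\<mu> * q^2) (\<mu> * q - \<mu>).
      \<forall>y'\<in>codes q (\<mu> * q) (\<mu> * q^2) (\<mu> * q - \<mu>). netcode (\<mu>*q) q x y \<longrightarrow> netcode (\<mu>*q) q x' y' \<longrightarrow>
      ((x,x') \<in> net_iso \<longleftrightarrow> (y,y') \<in> code_equiv q (\<mu>*q))"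
  proof (intro ballI impI)
    fix x x' y y' assume "x \<in> symmetric_nets \<mu> q" "x' \<in> symmetric_nets \<mu> q"
      "y \<in> codes q (\<mu> * q) (\<mu> * q^2) (\<mu> * q - \<mu>)" "y' \<in> codes q (\<mu> * q) (\<mu> * q^2) (\<mu> * q - \<mu>)"
      "netcode (\<mu>*q) q x y" "netcode (\<mu>*q) q x' y'"
    thus "(x,x') \<in> net_iso \<longleftrightarrow> (y,y') \<in> code_equiv q (\<mu>*q)" using compat[OF assms] by blast
  qed
qed

end
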